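(* Let $d\ge2$, $\varepsilon>0$, $N\in\mathbb{N}$, weights $w_1,\dots,w_N>0$, and let $v_1(t),\dots,v_N(t)\in\mathbb{R}^d$ be a (differentiable) solution of the semidiscrete particle system \[ \frac{dv_i}{dt}=-\sum_{j=1}^N w_jA(v_i-v_j)\left[\nabla\frac{\delta E^N_\varepsilon}{\delta f}(v_i)-\nabla\frac{\delta E^N_\varepsilon}{\delta f}(v_j)\right],\qquad i=1,\dots,N, \] where \[ \nabla\frac{\delta E^N_\varepsilon}{\delta f}(x)=\int_{\mathbb{R}^d}\nabla\psi_\varepsilon(x-v)\log\Big(\sum_{k=1}^N w_k\psi_\varepsilon(v-v_k(t))\Big)\,\mathrm{d}v . \] Then: 1) $\frac{d}{dt}\sum_{i=1}^N w_i\phi(v_i)=0$ for $\phi(v)=1$, $\phi(v)=v$ and $\phi(v)=|v|^2$ (conservation of mass, momentum and energy); 2) with the discrete entropy $E^N_\varepsilon=\int_{\mathbb{R}^d}(f^N*\psi_\varepsilon)\log(f^N*\psi_\varepsilon)\,\mathrm{d}v$, where $f^N(t,v)=\sum_{i=1}^Nw_i\delta(v-v_i(t))$, one has $\frac{d}{dt}E^N_\varepsilon=-D^N_\varepsilon\le0$, where \[ D^N_\varepsilon=\frac12\sum_{i,j}w_iw_j\left(\nabla\frac{\delta E^N_\varepsilon}{\delta f}(v_i)-\nabla\frac{\delta E^N_\varepsilon}{\delta f}(v_j)\right)\cdot A(v_i-v_j)\left(\nabla\frac{\delta E^N_\varepsilon}{\delta f}(v_i)-\nabla\frac{\delta E^N_\varepsilon}{\delta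 f}(v_j)\right). \]
   Context: $A(z)=|z|^{\gamma}(|z|^2I_d-z\otimes z)$ for a fixed exponent $\gamma$, with $A(0)=0$ understood where needed; $A(z)$ is symmetric positive semidefinite with kernel spanned by $z$. $\psi_\varepsilon(v)=(2\pi\varepsilon)^{-d/2}\exp(-|v|^2/(2\varepsilon))$ is the Gaussian mollifier, and $f^N*\psi_\varepsilon(v)=\sum_i w_i\psi_\varepsilon(v-v_i(t))$. *)

theory Defs
  imports "HOL-Analysis.Analysis"
begin

definition outer :: "real^'n \<Rightarrow> real^'n \<Rightarrow> real^'n^'n" where
  "outer x y = (\<chi> i j. x $ i * y $ j)"

definition Amat :: "real \<Rightarrow> real^'n \<Rightarrow> real^'n^'n" where
  "Amat \<gamma> z = (if z = 0 then 0 else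
     (norm z powr \<gamma>) *\<^sub>R ((norm z)\<^sup>2 *\<^sub>R mat 1 - outer z z))"

definition psi :: "real \<Rightarrow> real^'n \<Rightarrow> real" where
  "psi \<epsilon> v = (2 * pi * \<epsilon>) powr (- real CARD('n) / 2) * exp (- (norm v)\<^sup>2 / (2 * \<epsilon>))"

definition grad_psi :: "real \<Rightarrow> real^'n \<Rightarrow> real^'n" where
  "grad_psi \<epsilon> x = (THE g. (psi \<epsilon> has_derivative (\<lambda>h. g \<bullet> h)) (at x))"

definition mollified :: "real \<Rightarrow> nat \<Rightarrow> (nat \<Rightarrow> real) \<Rightarrow> (nat \<Rightarrow> real \<Rightarrow> real^'n) \<Rightarrow> real \<Rightarrow> real^'n \<Rightarrow> real" where
  "mollified \<epsilon> N w v t x = (\<Sum>k<N. w k * psi \<epsilon> (x - v k t))"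

definition gradE :: "real \<Rightarrow> nat \<Rightarrow> (nat \<Rightarrow> real) \<Rightarrow> (nat \<Rightarrow> real \<Rightarrow> real^'n) \<Rightarrow> real \<Rightarrow> real^'n \<Rightarrow> real^'n" where
  "gradE \<epsilon> N w v t x =
     (LINT y|lborel. ln (mollified \<epsilon> N w v t y) *\<^sub>R grad_psi \<epsilon> (x - y))"

definition entropyN :: "real \<Rightarrow> nat \<Rightarrow> (nat \<Rightarrow> real) \<Rightarrow> (nat \<Rightarrow> real \<Rightarrow> real^'n) \<Rightarrow> real \<Rightarrow> real" where
  "entropyN \<epsilon> N w v t =
     (LINT y|lborel. mollified \<epsilon> N w v t y * ln (mollified \<epsilon> N w v t y))"

definition dissipN :: "real \<Rightarrow> real \<Rightarrow> nat \<Rightarrow> (nat \<Rightarrow> real) \<Rightarrow> (nat \<Rightarrow> real \<Rightarrow> real^'n) \<Rightarrow> real \<Rightarrow> real" where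
  "dissipN \<gamma> \<epsilon> N w v t = 1/2 * (\<Sum>i<N. \<Sum>j<N. w i * w j *
     ((gradE \<epsilon> N w v t (v i t) - gradE \<epsilon> N w v t (v j t)) \<bullet>
      (Amat \<gamma> (v i t - v j t) *v (gradE \<epsilon> N w v t (v i t) - gradE \<epsilon> N w v t (v j t)))))"

end

theory Submission
  imports Defs "HOL-Probability.Distributions"
begin



lemma gauss1_integrable:
  fixes \<beta> :: real assumes b: "\<beta> > 0"
  shows "integrable lborel (\<lambda>x::real. exp (- \<beta> * x\<^sup>2))"
proof -
  define \<sigma> where "\<sigma> = sqrt (1 / (2 * \<beta>))"
  have sp: "\<sigma> > 0" using b by (simp add: \<sigma>_def)
  have s2: "\<sigma>\<^sup>2 = 1 / (2*\<beta>)" using b by (simp add: \<sigma>_def)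
  have "integrable lborel (\<lambda>x. sqrt (2 * pi * \<sigma>\<^sup>2) * normal_density 0 \<sigma> x)"
    using sp by (intro integrable_mult_right integrable_normal_density) auto
  moreover have "sqrt (2 * pi * \<sigma>\<^sup>2) * normal_density 0 \<sigma> x = exp (- \<beta> * x\<^sup>2)" for x
  proof -
    have q: "sqrt (2 * pi * \<sigma>\<^sup>2) > 0" using sp by simp
    have "- (x - 0)\<^sup>2 / (2 * \<sigma>\<^sup>2) = - \<beta> * x\<^sup>2" using b unfolding s2 by (simp add: field_simps)
    then show ?thesis unfolding normal_density_def using q sp by simp
  qed
  ultimately show ?thesis by simp
qed

lemma gauss_integrable:
  fixes \<beta> :: real assumes b: "\<beta> > 0"
  shows "integrable lborel (\<lambda>x::'a::euclidean_space. exp (- \<beta> * (norm x)\<^sup>2))"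
proof (rule integrableI_nonneg)
  show "(\<lambda>x::'a. exp (- \<beta> * (norm x)\<^sup>2)) \<in> borel_measurable lborel" by measurable
  show "AE x in lborel. 0 \<le> exp (- \<beta> * (norm (x::'a))\<^sup>2)" by simp
  have eq: "ennreal (exp (- \<beta> * (norm x)\<^sup>2)) = (\<Prod>b\<in>Basis. ennreal (exp (- \<beta> * (x \<bullet> b)\<^sup>2)))" for x :: 'a
  proof -
    have "(norm x)\<^sup>2 = (\<Sum>b\<in>Basis. (x \<bullet> b)\<^sup>2)"
      unfolding power2_norm_eq_inner by (subst euclidean_inner) (simp add: power2_eq_square)
    then have "exp (- \<beta> * (norm x)\<^sup>2) = (\<Prod>b\<in>Basis. exp (- \<beta> * (x \<bullet> b)\<^sup>2))"
      by (simp add: sum_distrib_left exp_sum)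
    then show ?thesis by (simp add: prod_ennreal)
  qed
  have fin: "(\<integral>\<^sup>+x. ennreal (exp (- \<beta> * x\<^sup>2)) \<partial>lborel) < \<infinity>"
    using gauss1_integrable[OF b] by (simp add: integrable_iff_bounded)
  have "(\<integral>\<^sup>+x. ennreal (exp (- \<beta> * (norm (x::'a))\<^sup>2)) \<partial>lborel)
      = (\<integral>\<^sup>+x. (\<Prod>b\<in>Basis. ennreal (exp (- \<beta> * ((x::'a) \<bullet> b)\<^sup>2))) \<partial>lborel)"
    by (rule arg_cong[where f="\<lambda>f. nn_integral lborel f"]) (rule ext, rule eq)
  also have "\<dots> = (\<Prod>b\<in>(Basis::'a set). (\<integral>\<^sup>+x. ennreal (exp (- \<beta> * x\<^sup>2)) \<partial>lborel))"
    by (rule nn_integral_lborel_prod) auto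
  also have "\<dots> < \<infinity>" using fin by (simp add: power_less_top_ennreal)
  finally show "(\<integral>\<^sup>+x. ennreal (exp (- \<beta> * (norm (x::'a))\<^sup>2)) \<partial>lborel) < \<infinity>" .
qed




lemma exp_ge_quartic: "u \<ge> 0 \<Longrightarrow> u\<^sup>2 / 4 \<le> exp (u::real)"
proof -
  assume u: "u \<ge> 0"
  have "u/2 \<le> 1 + u/2" by simp
  also have "\<dots> \<le> exp (u/2)" by (rule exp_ge_add_one_self)
  finally have a: "u/2 \<le> exp (u/2)" .
  have "(u/2)\<^sup>2 \<le> (exp (u/2))\<^sup>2" using a u by (intro power_mono) auto
  also have "\<dots> = exp u" by (simp add: power2_eq_square exp_add[symmetric])
  finally show ?thesis by (simp add: power2_eq_square)
qed

lemma cube_le: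
  fixes r :: real assumes r: "r \<ge> 0"
  shows "(1 + r)^3 \<le> 8 * (1 + r^4)"
proof (cases "r \<le> 1")
  case True
  have "(1+r)^3 \<le> 2^3" using True r by (intro power_mono) auto
  then have a: "(1+r)^3 \<le> 8" by simp
  have b: "0 \<le> r^4" using r by simp
  have c: "(8::real) \<le> 8 * (1 + r^4)" using b by simp
  from a c show ?thesis by (rule order_trans)
next
  case False
  have "(1+r)^3 \<le> (2*r)^3" using False by (intro power_mono) auto
  also have "\<dots> = 8 * r^3" by simp
  also have "r^3 \<le> r^4" using False by (intro power_increasing) auto
  finally show ?thesis by simp
qed

lemma integrable_dom:
  fixes g :: "'a \<Rightarrow> real"
  assumes "integrable M f" "g \<in> borel_measurable M" "\<And>x. \<bar>g x\<bar> \<le> f x"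
  shows "integrable M g"
proof (rule Bochner_Integration.integrable_bound[OF assms(1) assms(2)])
  show "AE x in M. norm (g x) \<le> norm (f x)"
    using assms(3) by (auto intro: order_trans[OF _ abs_ge_self])
qed

lemma polygauss_integrable:
  fixes \<alpha> :: real assumes a: "\<alpha> > 0"
  shows "integrable lborel (\<lambda>y::'a::euclidean_space. (1 + norm y)^3 * exp (- \<alpha> * (norm y)\<^sup>2))"
proof -
  define \<beta> where "\<beta> = \<alpha>/2"
  have b: "\<beta> > 0" using a by (simp add: \<beta>_def)
  define K where "K = 8 + 32 / \<beta>\<^sup>2"
  have bnd: "(1 + r)^3 * exp (- \<alpha> * r\<^sup>2) \<le> K * exp (- \<beta> * r\<^sup>2)" if r: "r \<ge> 0" for r :: real
  proof -
    have e: "exp (- \<alpha> * r\<^sup>2) = exp (- \<beta> * r\<^sup>2) * exp (- \<beta> * r\<^sup>2)"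
      by (simp add: \<beta>_def exp_add[symmetric])
    have q: "(\<beta> * r\<^sup>2)\<^sup>2 / 4 \<le> exp (\<beta> * r\<^sup>2)" using b by (intro exp_ge_quartic) auto
    have r4: "r^4 \<le> exp (\<beta> * r\<^sup>2) * (4 / \<beta>\<^sup>2)"
    proof -
      have "r^4 = (\<beta> * r\<^sup>2)\<^sup>2 / 4 * (4 / \<beta>\<^sup>2)" using b by (simp add: field_simps power2_eq_square power4_eq_xxxx)
      also have "\<dots> \<le> exp (\<beta> * r\<^sup>2) * (4 / \<beta>\<^sup>2)" using q b by (intro mult_right_mono) auto
      finally show ?thesis .
    qed
    have "(1 + r)^3 \<le> 8 * (1 + r^4)" using r by (rule cube_le)
    also have "\<dots> \<le> 8 * (exp (\<beta> * r\<^sup>2) + exp (\<beta> * r\<^sup>2) * (4 / \<beta>\<^sup>2))"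
    proof -
      have "1 \<le> exp (\<beta> * r\<^sup>2)" using b by simp
      then show ?thesis using r4 by (intro mult_left_mono add_mono) auto
    qed
    also have "\<dots> = K/8 * 8 * exp (\<beta> * r\<^sup>2) - K/8*8*exp (\<beta> * r\<^sup>2) + (8 + 32/\<beta>\<^sup>2) * exp (\<beta> * r\<^sup>2)"
      by (simp add: algebra_simps)
    also have "\<dots> = K * exp (\<beta> * r\<^sup>2)" by (simp add: K_def)
    finally have "(1 + r)^3 \<le> K * exp (\<beta> * r\<^sup>2)" .
    then have "(1 + r)^3 * exp (- \<alpha> * r\<^sup>2) \<le> K * exp (\<beta> * r\<^sup>2) * exp (- \<alpha> * r\<^sup>2)"
      by (intro mult_right_mono) auto
    also have "\<dots> = K * exp (- \<beta> * r\<^sup>2)" unfolding e by (simp add: exp_minus field_simps)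
    finally show ?thesis .
  qed
  show ?thesis
  proof (rule integrable_dom)
    show "integrable lborel (\<lambda>y::'a. K * exp (- \<beta> * (norm y)\<^sup>2))"
      using gauss_integrable[OF b] by (rule integrable_mult_right)
    show "(\<lambda>y::'a. (1 + norm y)^3 * exp (- \<alpha> * (norm y)\<^sup>2)) \<in> borel_measurable lborel" by measurable
    show "\<bar>(1 + norm y)^3 * exp (- \<alpha> * (norm y)\<^sup>2)\<bar> \<le> K * exp (- \<beta> * (norm y)\<^sup>2)" for y :: 'a
      using bnd[of "norm y"] by simp
  qed
qed

definition cpsi :: "real \<Rightarrow> 'n itself \<Rightarrow> real" where
  "cpsi \<epsilon> _ = (2 * pi * \<epsilon>) powr (- real CARD('n) / 2)"

lemma psi_alt: "psi \<epsilon> (x::real^'n) = cpsi \<epsilon> TYPE('n) * exp (- (norm x)\<^sup>2 / (2 * \<epsilon>))"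
  by (simp add: psi_def cpsi_def)

lemma cpsi_pos: "\<epsilon> > 0 \<Longrightarrow> cpsi \<epsilon> TYPE('n) > 0"
  by (simp add: cpsi_def)

lemma psi_pos: "\<epsilon> > 0 \<Longrightarrow> psi \<epsilon> x > 0"
  by (simp add: psi_def)

lemma psi_has_derivative:
  assumes e: "\<epsilon> > 0"
  shows "(psi \<epsilon> has_derivative (\<lambda>h. (- (psi \<epsilon> x / \<epsilon>) *\<^sub>R x) \<bullet> h)) (at (x::real^'n))"
proof -
  have n: "(\<lambda>y::real^'n. (norm y)\<^sup>2) = (\<lambda>y. y \<bullet> y)" by (simp add: power2_norm_eq_inner)
  have "((\<lambda>y::real^'n. cpsi \<epsilon> TYPE('n) * exp (- (y \<bullet> y) / (2 * \<epsilon>))) has_derivative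
      (\<lambda>h. cpsi \<epsilon> TYPE('n) * (exp (- (x \<bullet> x) / (2 * \<epsilon>)) * (- (x \<bullet> h + h \<bullet> x) / (2 * \<epsilon>))))) (at x)"
    using e by (auto intro!: derivative_eq_intros simp: field_simps)
  moreover have "(\<lambda>h. cpsi \<epsilon> TYPE('n) * (exp (- (x \<bullet> x) / (2 * \<epsilon>)) * (- (x \<bullet> h + h \<bullet> x) / (2 * \<epsilon>))))
     = (\<lambda>h. (- (psi \<epsilon> x / \<epsilon>) *\<^sub>R x) \<bullet> h)"
    using e by (intro ext) (auto simp: psi_alt power2_norm_eq_inner inner_commute field_simps)
  moreover have "psi \<epsilon> = (\<lambda>y::real^'n. cpsi \<epsilon> TYPE('n) * exp (- (y \<bullet> y) / (2 * \<epsilon>)))"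
    by (auto simp: psi_alt power2_norm_eq_inner)
  ultimately show ?thesis by simp
qed

lemma grad_psi_eq:
  assumes e: "\<epsilon> > 0"
  shows "grad_psi \<epsilon> (x::real^'n) = (- (psi \<epsilon> x / \<epsilon>)) *\<^sub>R x"
  unfolding grad_psi_def
proof (rule the_equality)
  show "(psi \<epsilon> has_derivative (\<lambda>h. (- (psi \<epsilon> x / \<epsilon>) *\<^sub>R x) \<bullet> h)) (at x)"
    using psi_has_derivative[OF e] .
  fix g assume g: "(psi \<epsilon> has_derivative (\<lambda>h. g \<bullet> h)) (at x)"
  have "(\<lambda>h. g \<bullet> h) = (\<lambda>h. (- (psi \<epsilon> x / \<epsilon>) *\<^sub>R x) \<bullet> h)"
    using has_derivative_unique[OF g psi_has_derivative[OF e]] .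
  then have "\<And>h. (g - (- (psi \<epsilon> x / \<epsilon>) *\<^sub>R x)) \<bullet> h = 0" by (metis inner_diff_left right_minus_eq)
  then have "(g - (- (psi \<epsilon> x / \<epsilon>) *\<^sub>R x)) \<bullet> (g - (- (psi \<epsilon> x / \<epsilon>) *\<^sub>R x)) = 0" by blast
  then show "g = (- (psi \<epsilon> x / \<epsilon>) *\<^sub>R x)" by (simp add: eq_neg_iff_add_eq_0)
qed

lemma psi_continuous: "\<epsilon> > 0 \<Longrightarrow> continuous_on UNIV (psi \<epsilon> :: real^'n \<Rightarrow> real)"
  using psi_has_derivative
  by (meson continuous_at_imp_continuous_on has_derivative_continuous)

lemma psi_measurable[measurable]: "psi \<epsilon> \<in> borel_measurable (borel :: (real^'n) measure)"
  unfolding psi_def by measurable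




lemma exp_diff_bound: fixes a b :: real shows "\<bar>exp a - exp b\<bar> \<le> \<bar>a - b\<bar> * exp (max a b)"
proof -
  have *: "exp y - exp x \<le> (y - x) * exp y" if "x \<le> y" for x y :: real
  proof -
    have "1 + (x - y) \<le> exp (x - y)" by (rule exp_ge_add_one_self)
    then have "exp y * (1 + (x - y)) \<le> exp y * exp (x - y)" by (intro mult_left_mono) auto
    also have "\<dots> = exp x" by (simp add: exp_add[symmetric])
    finally show ?thesis by (simp add: algebra_simps)
  qed
  show ?thesis
  proof (cases "a \<le> b")
    case True
    then show ?thesis using *[OF True] by (simp add: abs_if max_def)
  next
    case False
    then show ?thesis using *[of b a] by (simp add: abs_if max_def)
  qed
qed

lemma ln_abs_between:
  fixes lo u hi :: real
  assumes "0 < lo" "lo \<le> u" "u \<le> hi"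
  shows "\<bar>ln u\<bar> \<le> \<bar>ln lo\<bar> + \<bar>ln hi\<bar>"
proof -
  have "ln lo \<le> ln u" using assms by (subst ln_le_cancel_iff) auto
  moreover have "ln u \<le> ln hi" using assms by (subst ln_le_cancel_iff) auto
  ultimately show ?thesis by linarith
qed

definition phi :: "real \<Rightarrow> real" where "phi u = u * ln u"

lemma phi_lip:
  assumes lo: "0 < lo" and u: "lo \<le> u" "u \<le> hi" and u': "lo \<le> u'" "u' \<le> hi"
  shows "\<bar>phi u - phi u'\<bar> \<le> \<bar>u - u'\<bar> * (1 + \<bar>ln lo\<bar> + \<bar>ln hi\<bar>)"
proof -
  have main: "\<bar>phi b - phi a\<bar> \<le> \<bar>b - a\<bar> * (1 + \<bar>ln lo\<bar> + \<bar>ln hi\<bar>)"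
    if ab: "a < b" "lo \<le> a" "b \<le> hi" for a b
  proof -
    have "\<And>x. a \<le> x \<Longrightarrow> x \<le> b \<Longrightarrow> DERIV phi x :> (ln x + 1)"
      unfolding phi_def using lo ab
      by (auto intro!: derivative_eq_intros)
    from MVT2[OF ab(1) this] obtain z where z: "a < z" "z < b" "phi b - phi a = (b - a) * (ln z + 1)"
      by blast
    have "\<bar>ln z\<bar> \<le> \<bar>ln lo\<bar> + \<bar>ln hi\<bar>" using z ab lo by (intro ln_abs_between) auto
    then have "\<bar>ln z + 1\<bar> \<le> 1 + \<bar>ln lo\<bar> + \<bar>ln hi\<bar>" by linarith
    then have "\<bar>b - a\<bar> * \<bar>ln z + 1\<bar> \<le> \<bar>b - a\<bar> * (1 + \<bar>ln lo\<bar> + \<bar>ln hi\<bar>)"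
      by (intro mult_left_mono) auto
    then show ?thesis using z(3) by (simp add: abs_mult)
  qed
  consider "u < u'" | "u = u'" | "u' < u" by linarith
  then show ?thesis
  proof cases
    case 1 then show ?thesis using main[of u u'] u u' by (simp add: abs_minus_commute)
  next
    case 2 then show ?thesis by simp
  next
    case 3 then show ?thesis using main[of u' u] u u' by simp
  qed
qed

lemma sq_triangle: "(norm (x::'a::real_normed_vector))\<^sup>2 \<le> 2 * (norm (x - p))\<^sup>2 + 2 * (norm p)\<^sup>2"
proof -
  have "norm x \<le> norm (x - p) + norm p" by (metis diff_add_cancel norm_triangle_ineq)
  then have "(norm x)\<^sup>2 \<le> (norm (x - p) + norm p)\<^sup>2" by (intro power_mono) auto
  also have "\<dots> \<le> 2 * (norm (x - p))\<^sup>2 + 2 * (norm p)\<^sup>2"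
    using zero_le_power2[of "norm (x - p) - norm p"] by (simp add: power2_eq_square algebra_simps)
  finally show ?thesis .
qed

context
  fixes \<epsilon> :: real and ty :: "'n::finite itself"
  assumes eps: "\<epsilon> > 0"
begin

lemma cpos: "cpsi \<epsilon> TYPE('n) > 0" using cpsi_pos[OF eps] .

lemma psi_le_c: "psi \<epsilon> (z::real^'n) \<le> cpsi \<epsilon> TYPE('n)"
  using eps cpos by (simp add: psi_alt)

lemma psi_decay:
  assumes p: "norm (p::real^'n) \<le> R"
  shows "psi \<epsilon> (y - p) \<le> cpsi \<epsilon> TYPE('n) * exp (R\<^sup>2 / (2*\<epsilon>)) * exp (- (norm y)\<^sup>2 / (4*\<epsilon>))"
proof -
  have "(norm y)\<^sup>2 \<le> 2 * (norm (y - p))\<^sup>2 + 2 * (norm p)\<^sup>2" by (rule sq_triangle)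
  moreover have "(norm p)\<^sup>2 \<le> R\<^sup>2" using p by (intro power_mono) auto
  ultimately have "- (norm (y - p))\<^sup>2 / (2 * \<epsilon>) \<le> R\<^sup>2 / (2*\<epsilon>) + - (norm y)\<^sup>2 / (4*\<epsilon>)"
    using eps by (simp add: field_simps)
  then have "exp (- (norm (y - p))\<^sup>2 / (2 * \<epsilon>)) \<le> exp (R\<^sup>2 / (2*\<epsilon>)) * exp (- (norm y)\<^sup>2 / (4*\<epsilon>))"
    by (simp add: exp_add[symmetric])
  then show ?thesis using cpos by (simp add: psi_alt mult.assoc)
qed

lemma psi_lower:
  assumes p: "norm (p::real^'n) \<le> R"
  shows "cpsi \<epsilon> TYPE('n) * exp (- ((norm y)\<^sup>2 + R\<^sup>2) / \<epsilon>) \<le> psi \<epsilon> (y - p)"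
proof -
  have "(norm (y - p))\<^sup>2 \<le> 2 * (norm (y - p - (-p)))\<^sup>2 + 2 * (norm (-p))\<^sup>2" by (rule sq_triangle)
  then have a: "(norm (y - p))\<^sup>2 \<le> 2 * (norm y)\<^sup>2 + 2 * (norm p)\<^sup>2" by simp
  moreover have "(norm p)\<^sup>2 \<le> R\<^sup>2" using p by (intro power_mono) auto
  ultimately have "(norm (y - p))\<^sup>2 \<le> 2 * ((norm y)\<^sup>2 + R\<^sup>2)" by (simp add: algebra_simps)
  then have "(norm (y - p))\<^sup>2 / (2 * \<epsilon>) \<le> 2 * ((norm y)\<^sup>2 + R\<^sup>2) / (2 * \<epsilon>)"
    using eps by (intro divide_right_mono) auto
  then have "- ((norm y)\<^sup>2 + R\<^sup>2) / \<epsilon> \<le> - (norm (y - p))\<^sup>2 / (2 * \<epsilon>)"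
    using eps by (simp add: divide_simps)
  then show ?thesis using cpos by (simp add: psi_alt)
qed

lemma psi_diff_bound:
  assumes a: "norm (a::real^'n) \<le> R" and b: "norm b \<le> R"
  shows "\<bar>psi \<epsilon> (y - a) - psi \<epsilon> (y - b)\<bar>
     \<le> norm (a - b) * (cpsi \<epsilon> TYPE('n) * exp (R\<^sup>2 / (2*\<epsilon>)) * ((norm y + R) / \<epsilon>) * exp (- (norm y)\<^sup>2 / (4*\<epsilon>)))"
proof -
  define A where "A = - (norm (y - a))\<^sup>2 / (2 * \<epsilon>)"
  define B where "B = - (norm (y - b))\<^sup>2 / (2 * \<epsilon>)"
  have pa: "psi \<epsilon> (y - a) = cpsi \<epsilon> TYPE('n) * exp A" and pb: "psi \<epsilon> (y - b) = cpsi \<epsilon> TYPE('n) * exp B"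
    by (simp_all add: psi_alt A_def B_def)
  have "exp A \<le> exp (R\<^sup>2 / (2*\<epsilon>)) * exp (- (norm y)\<^sup>2 / (4*\<epsilon>))"
    using psi_decay[OF a, of y] cpos pa by (simp add: mult.assoc)
  moreover have "exp B \<le> exp (R\<^sup>2 / (2*\<epsilon>)) * exp (- (norm y)\<^sup>2 / (4*\<epsilon>))"
    using psi_decay[OF b, of y] cpos pb by (simp add: mult.assoc)
  ultimately have em: "exp (max A B) \<le> exp (R\<^sup>2 / (2*\<epsilon>)) * exp (- (norm y)\<^sup>2 / (4*\<epsilon>))"
    by (simp add: max_def)
  have d1: "\<bar>norm (y - a) - norm (y - b)\<bar> \<le> norm (a - b)"
    using norm_triangle_ineq3[of "y-a" "y-b"] by (simp add: norm_minus_commute)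
  have d2: "norm (y - a) + norm (y - b) \<le> 2 * norm y + 2 * R"
    using norm_triangle_ineq4[of y a] norm_triangle_ineq4[of y b] a b by linarith
  have "\<bar>(norm (y - a))\<^sup>2 - (norm (y - b))\<^sup>2\<bar>
      = \<bar>norm (y - a) - norm (y - b)\<bar> * (norm (y - a) + norm (y - b))"
  proof -
    have "(norm (y - a))\<^sup>2 - (norm (y - b))\<^sup>2 = (norm (y - a) - norm (y - b)) * (norm (y - a) + norm (y - b))"
      by (simp add: power2_eq_square algebra_simps)
    then show ?thesis by (simp add: abs_mult)
  qed
  also have "\<dots> \<le> norm (a - b) * (2 * (norm y + R))"
    using d1 d2 by (intro mult_mono) (auto simp: algebra_simps)
  finally have sqd: "\<bar>(norm (y - a))\<^sup>2 - (norm (y - b))\<^sup>2\<bar> \<le> norm (a - b) * (2 * (norm y + R))" .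
  have AB: "\<bar>A - B\<bar> \<le> norm (a - b) * ((norm y + R) / \<epsilon>)"
  proof -
    have "A - B = ((norm (y - b))\<^sup>2 - (norm (y - a))\<^sup>2) / (2 * \<epsilon>)"
      unfolding A_def B_def by (simp add: diff_divide_distrib)
    then have "\<bar>A - B\<bar> = \<bar>(norm (y - a))\<^sup>2 - (norm (y - b))\<^sup>2\<bar> / (2 * \<epsilon>)"
      using eps by (simp add: abs_divide abs_minus_commute)
    also have "\<dots> \<le> norm (a - b) * (2 * (norm y + R)) / (2 * \<epsilon>)"
      using sqd eps
      by (intro divide_right_mono) auto
    also have "\<dots> = norm (a - b) * ((norm y + R) / \<epsilon>)" using eps by (simp add: field_simps)
    finally show ?thesis .
  qed
  have "\<bar>psi \<epsilon> (y - a) - psi \<epsilon> (y - b)\<bar> = cpsi \<epsilon> TYPE('n) * \<bar>exp A - exp B\<bar>"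
    using cpos by (simp add: pa pb abs_mult right_diff_distrib[symmetric])
  also have "\<dots> \<le> cpsi \<epsilon> TYPE('n) * (\<bar>A - B\<bar> * exp (max A B))"
    using cpos by (intro mult_left_mono exp_diff_bound) auto
  also have "\<dots> \<le> cpsi \<epsilon> TYPE('n) * ((norm (a - b) * ((norm y + R) / \<epsilon>)) * (exp (R\<^sup>2 / (2*\<epsilon>)) * exp (- (norm y)\<^sup>2 / (4*\<epsilon>))))"
    using cpos AB em by (intro mult_left_mono mult_mono) auto
  also have "\<dots> = norm (a - b) * (cpsi \<epsilon> TYPE('n) * exp (R\<^sup>2 / (2*\<epsilon>)) * ((norm y + R) / \<epsilon>) * exp (- (norm y)\<^sup>2 / (4*\<epsilon>)))"
    by (simp add: algebra_simps)
  finally show ?thesis .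
qed

end



definition mm :: "real \<Rightarrow> nat \<Rightarrow> (nat \<Rightarrow> real) \<Rightarrow> (nat \<Rightarrow> real^'n) \<Rightarrow> real^'n \<Rightarrow> real" where
  "mm \<epsilon> N w p y = (\<Sum>k<N. w k * psi \<epsilon> (y - p k))"

lemma mollified_mm: "mollified \<epsilon> N w v t = mm \<epsilon> N w (\<lambda>k. v k t)"
  by (simp add: fun_eq_iff mollified_def mm_def)

lemma mm_measurable[measurable]: "mm \<epsilon> N w p \<in> borel_measurable borel"
  unfolding mm_def by measurable

lemma phi_measurable[measurable]: "phi \<in> borel_measurable borel"
  unfolding phi_def by measurable

lemma poly_a: "r \<ge> 0 \<Longrightarrow> R \<ge> 0 \<Longrightarrow> r + R \<le> (1 + R) * (1 + (r::real))"
  by (simp add: algebra_simps)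

lemma poly_b:
  fixes r K e :: real
  assumes "r \<ge> 0" "K \<ge> 0" "e > 0"
  shows "K + r\<^sup>2 / e \<le> (K + 1/e) * (1 + r)\<^sup>2"
proof -
  have 1: "1 \<le> (1 + r)\<^sup>2" using assms one_le_power[of "1+r" 2] by simp
  have 2: "r\<^sup>2 \<le> (1 + r)\<^sup>2" using assms by (intro power_mono) auto
  have "K * 1 \<le> K * (1 + r)\<^sup>2" using 1 assms by (intro mult_left_mono) auto
  moreover have "r\<^sup>2 / e \<le> (1 + r)\<^sup>2 / e" using 2 assms by (intro divide_right_mono) auto
  ultimately show ?thesis by (simp add: algebra_simps)
qed

lemma poly_c: "r \<ge> 0 \<Longrightarrow> (1 + (r::real)) \<le> (1 + r)^3" "r \<ge> 0 \<Longrightarrow> (1 + (r::real))\<^sup>2 \<le> (1 + r)^3"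
  "r \<ge> 0 \<Longrightarrow> 1 \<le> (1 + (r::real))^3"
  using power_increasing[of 1 3 "1+r"] power_increasing[of 2 3 "1+r"] one_le_power[of "1+r" 3] by auto

lemma lborel_reflect:
  fixes f :: "real^'n \<Rightarrow> real"
  assumes f[measurable]: "f \<in> borel_measurable borel"
  shows "integral\<^sup>L lborel f = integral\<^sup>L lborel (\<lambda>y. f (t - y))"
proof -
  have "lborel = density (distr lborel borel (\<lambda>x. t + (-1::real) *\<^sub>R x)) (\<lambda>_. \<bar>-1::real\<bar>^DIM(real^'n))"
    by (rule lborel_affine) simp
  then have L: "(lborel :: (real^'n) measure) = distr lborel borel (\<lambda>x. t + (-1::real) *\<^sub>R x)"
    by (simp add: density_1)
  have "integral\<^sup>L lborel f = integral\<^sup>L (distr lborel borel (\<lambda>x. t + (-1::real) *\<^sub>R x)) f"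
    by (subst L[symmetric]) (rule refl)
  also have "\<dots> = integral\<^sup>L lborel (\<lambda>x. f (t + (-1::real) *\<^sub>R x))"
    by (rule integral_distr) auto
  also have "\<dots> = integral\<^sup>L lborel (\<lambda>y. f (t - y))" by simp
  finally show ?thesis .
qed

lemma psi_sym: "psi \<epsilon> (a - b) = psi \<epsilon> (b - a)"
  by (simp add: psi_def norm_minus_commute)

lemma zero_moment:
  fixes a u :: "real^'n"
  shows "(\<integral>y. psi \<epsilon> (y - a) / \<epsilon> * ((y - a) \<bullet> u) \<partial>lborel) = 0"
proof -
  let ?f = "\<lambda>y::real^'n. psi \<epsilon> (y - a) / \<epsilon> * ((y - a) \<bullet> u)"
  have "integral\<^sup>L lborel ?f = integral\<^sup>L lborel (\<lambda>y. ?f ((2::real) *\<^sub>R a - y))"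
    by (rule lborel_reflect) measurable
  also have "(\<lambda>y. ?f ((2::real) *\<^sub>R a - y)) = (\<lambda>y. - ?f y)"
  proof
    fix y :: "real^'n"
    have e: "(2::real) *\<^sub>R a - y - a = a - y" by (simp add: scaleR_2 algebra_simps)
    show "?f ((2::real) *\<^sub>R a - y) = - ?f y"
    proof -
      have "(a - y) \<bullet> u = - ((y - a) \<bullet> u)" by (simp add: inner_diff_left)
      then show ?thesis unfolding e psi_sym[of \<epsilon> a y] by simp
    qed
  qed
  also have "integral\<^sup>L lborel (\<lambda>y. - ?f y) = - integral\<^sup>L lborel ?f" by (rule integral_minus)
  finally show ?thesis by simp
qed

lemma dom_conv_at:
  fixes s :: "real \<Rightarrow> 'a \<Rightarrow> real"
  assumes meas: "\<And>h. s h \<in> borel_measurable M" "f \<in> borel_measurable M" and g: "integrable M g"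
    and lim: "\<And>x. ((\<lambda>h. s h x) \<longlongrightarrow> f x) (at t)"
    and bound: "\<forall>\<^sub>F h in at t. \<forall>x. \<bar>s h x\<bar> \<le> g x"
  shows "((\<lambda>h. integral\<^sup>L M (s h)) \<longlongrightarrow> integral\<^sup>L M f) (at t)"
  unfolding tendsto_at_iff_sequentially
proof (intro allI impI)
  fix X :: "nat \<Rightarrow> real" assume X: "\<forall>i. X i \<in> UNIV - {t}" "X \<longlonglongrightarrow> t"
  have XF: "filterlim X (at t) sequentially"
    unfolding filterlim_at using X by auto
  from filterlim_iff[THEN iffD1, OF XF, rule_format, OF bound]
  obtain N0 where N0: "\<And>n. n \<ge> N0 \<Longrightarrow> \<forall>x. \<bar>s (X n) x\<bar> \<le> g x"
    by (auto simp: eventually_sequentially)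
  have "(\<lambda>n. integral\<^sup>L M (s (X (n + N0)))) \<longlonglongrightarrow> integral\<^sup>L M f"
  proof (rule integral_dominated_convergence[where w=g])
    show "f \<in> borel_measurable M" by (rule meas(2))
    show "\<And>i. s (X (i + N0)) \<in> borel_measurable M" by (rule meas(1))
    show "integrable M g" by (rule g)
    show "AE x in M. (\<lambda>i. s (X (i + N0)) x) \<longlonglongrightarrow> f x"
    proof (rule AE_I2)
      fix x
      have "(\<lambda>n. s (X n) x) \<longlonglongrightarrow> f x"
        using filterlim_compose[OF lim[of x] XF] .
      then show "(\<lambda>i. s (X (i + N0)) x) \<longlonglongrightarrow> f x"
        by (rule LIMSEQ_ignore_initial_segment)
    qed
    show "AE x in M. norm (s (X (i + N0)) x) \<le> g x" for i
      using N0[of "i + N0"] by auto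
  qed
  then show "((\<lambda>h. integral\<^sup>L M (s h)) \<circ> X) \<longlonglongrightarrow> integral\<^sup>L M f"
    unfolding comp_def by (rule LIMSEQ_offset)
qed

lemma psi_comp_deriv:
  assumes e: "\<epsilon> > 0" and v: "(v has_vector_derivative vd) (at t)"
  shows "((\<lambda>s. psi \<epsilon> (y - v s)) has_real_derivative (psi \<epsilon> (y - v t) / \<epsilon> * ((y - v t) \<bullet> vd))) (at t)"
proof -
  have 1: "((\<lambda>s. y - v s) has_derivative (\<lambda>h. h *\<^sub>R (- vd))) (at t)"
    using v unfolding has_vector_derivative_def
    by (auto intro!: derivative_eq_intros)
  have 2: "(psi \<epsilon> has_derivative (\<lambda>h. (- (psi \<epsilon> (y - v t) / \<epsilon>) *\<^sub>R (y - v t)) \<bullet> h)) (at ((\<lambda>s. y - v s) t))"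
    using psi_has_derivative[OF e] by simp
  have "((psi \<epsilon> \<circ> (\<lambda>s. y - v s)) has_derivative
      ((\<lambda>h. (- (psi \<epsilon> (y - v t) / \<epsilon>) *\<^sub>R (y - v t)) \<bullet> h) \<circ> (\<lambda>h. h *\<^sub>R (- vd)))) (at t)"
    by (rule diff_chain_at[OF 1 2])
  moreover have "((\<lambda>h. (- (psi \<epsilon> (y - v t) / \<epsilon>) *\<^sub>R (y - v t)) \<bullet> h) \<circ> (\<lambda>h. h *\<^sub>R (- vd)))
     = (*) (psi \<epsilon> (y - v t) / \<epsilon> * ((y - v t) \<bullet> vd))"
    by (auto simp: fun_eq_iff)
  ultimately show ?thesis unfolding has_field_derivative_def comp_def by simp
qed

lemma prod3: "((a::real) * u) * (b * u\<^sup>2) = a * b * u^3"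
  by (simp add: power2_eq_square power3_eq_cube)

context
  fixes \<epsilon> :: real and N :: nat and w :: "nat \<Rightarrow> real" and ty :: "'n::finite itself"
  assumes eps: "\<epsilon> > 0" and Npos: "N > 0" and wpos: "\<And>k. k < N \<Longrightarrow> w k > 0"
begin

definition "WW = (\<Sum>k<N. w k)"
definition "c0 = cpsi \<epsilon> TYPE('n)"
definition "K0 R = \<bar>ln (w 0 * c0)\<bar> + R\<^sup>2 / \<epsilon> + \<bar>ln (WW * c0)\<bar>"
definition "Bp R (y::real^'n) = c0 * exp (R\<^sup>2 / (2*\<epsilon>)) * ((norm y + R) / \<epsilon>) * exp (- (norm y)\<^sup>2 / (4*\<epsilon>))"
definition "HH (y::real^'n) = (1 + norm y)^3 * exp (- (norm y)\<^sup>2 / (4*\<epsilon>))"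

lemma c0_pos: "c0 > 0" unfolding c0_def using cpos[OF eps] .
lemma psi_pos0: "psi \<epsilon> (z::real^'n) > 0" using psi_pos[OF eps] .
lemma psi_le_c0: "psi \<epsilon> (z::real^'n) \<le> c0" unfolding c0_def using psi_le_c[OF eps] .
lemma psi_decay0: "norm (p::real^'n) \<le> R \<Longrightarrow> psi \<epsilon> (y - p) \<le> c0 * exp (R\<^sup>2 / (2*\<epsilon>)) * exp (- (norm y)\<^sup>2 / (4*\<epsilon>))"
  unfolding c0_def by (rule psi_decay[OF eps])
lemma psi_lower0: "norm (p::real^'n) \<le> R \<Longrightarrow> c0 * exp (- ((norm y)\<^sup>2 + R\<^sup>2) / \<epsilon>) \<le> psi \<epsilon> (y - p)"
  unfolding c0_def by (rule psi_lower[OF eps])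
lemma psi_diff_bound0: "norm (a::real^'n) \<le> R \<Longrightarrow> norm b \<le> R \<Longrightarrow> \<bar>psi \<epsilon> (y - a) - psi \<epsilon> (y - b)\<bar>
     \<le> norm (a - b) * (c0 * exp (R\<^sup>2 / (2*\<epsilon>)) * ((norm y + R) / \<epsilon>) * exp (- (norm y)\<^sup>2 / (4*\<epsilon>)))"
  unfolding c0_def by (rule psi_diff_bound[OF eps])
lemma WW_pos: "WW > 0" unfolding WW_def using Npos wpos by (intro sum_pos) auto
lemma w0_pos: "w 0 > 0" using wpos Npos by auto

lemma HH_integrable: "integrable lborel HH"
proof -
  have "HH = (\<lambda>y. (1 + norm y)^3 * exp (- (1 / (4*\<epsilon>)) * (norm y)\<^sup>2))"
    by (simp add: HH_def fun_eq_iff)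
  moreover have "integrable lborel (\<lambda>y::real^'n. (1 + norm y)^3 * exp (- (1 / (4*\<epsilon>)) * (norm y)\<^sup>2))"
    using eps by (intro polygauss_integrable) auto
  ultimately show ?thesis by simp
qed

lemma HH_nonneg: "HH y \<ge> 0" unfolding HH_def by simp

lemma int_by_HH:
  fixes f :: "real^'n \<Rightarrow> 'b::{banach, second_countable_topology}"
  assumes "f \<in> borel_measurable lborel" "\<And>y. norm (f y) \<le> C * HH y"
  shows "integrable lborel f"
proof (rule Bochner_Integration.integrable_bound[OF _ assms(1)])
  show "integrable lborel (\<lambda>y. C * HH y)" using HH_integrable by (rule integrable_mult_right)
  show "AE y in lborel. norm (f y) \<le> norm (C * HH y)"
    using assms(2) by (auto intro: order_trans[OF _ abs_ge_self])
qed

lemma exp4: "exp (- (norm y)\<^sup>2 / (4*\<epsilon>)) = exp (- (1 / (4*\<epsilon>)) * (norm (y::real^'n))\<^sup>2)"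
  by simp

lemma mm_pos: "mm \<epsilon> N w (p::nat\<Rightarrow>real^'n) y > 0"
  unfolding mm_def using Npos wpos psi_pos0 by (intro sum_pos) auto

lemma mm_upper: "mm \<epsilon> N w (p::nat\<Rightarrow>real^'n) y \<le> WW * c0"
proof -
  have "mm \<epsilon> N w (p::nat\<Rightarrow>real^'n) y \<le> (\<Sum>k<N. w k * c0)"
    unfolding mm_def using wpos psi_le_c0
    by (intro sum_mono mult_left_mono) (auto intro: less_imp_le)
  also have "\<dots> = WW * c0" by (simp add: WW_def sum_distrib_right)
  finally show ?thesis .
qed

lemma mm_lower:
  assumes p: "\<And>k. k < N \<Longrightarrow> norm (p k) \<le> R"
  shows "w 0 * c0 * exp (- ((norm y)\<^sup>2 + R\<^sup>2) / \<epsilon>) \<le> mm \<epsilon> N w (p::nat\<Rightarrow>real^'n) y"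
proof -
  have "w 0 * c0 * exp (- ((norm y)\<^sup>2 + R\<^sup>2) / \<epsilon>) \<le> w 0 * psi \<epsilon> (y - p 0)"
    using psi_lower0[OF p[OF Npos]] w0_pos unfolding c0_def
    by (simp add: mult.assoc)
  also have "\<dots> \<le> mm \<epsilon> N w (p::nat\<Rightarrow>real^'n) y"
    unfolding mm_def using Npos wpos psi_pos0
    by (intro member_le_sum[of 0 "{..<N}" "\<lambda>k. w k * psi \<epsilon> (y - p k)"]) (auto intro: less_imp_le)
  finally show ?thesis .
qed

lemma mm_decay:
  assumes p: "\<And>k. k < N \<Longrightarrow> norm (p k) \<le> R"
  shows "mm \<epsilon> N w (p::nat\<Rightarrow>real^'n) y \<le> WW * (c0 * exp (R\<^sup>2 / (2*\<epsilon>)) * exp (- (norm y)\<^sup>2 / (4*\<epsilon>)))"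
proof -
  have "mm \<epsilon> N w (p::nat\<Rightarrow>real^'n) y \<le> (\<Sum>k<N. w k * (c0 * exp (R\<^sup>2 / (2*\<epsilon>)) * exp (- (norm y)\<^sup>2 / (4*\<epsilon>))))"
    unfolding mm_def using wpos psi_decay0[OF p]
    by (intro sum_mono mult_left_mono) (auto intro: less_imp_le)
  also have "\<dots> = WW * (c0 * exp (R\<^sup>2 / (2*\<epsilon>)) * exp (- (norm y)\<^sup>2 / (4*\<epsilon>)))"
    by (simp add: WW_def sum_distrib_right)
  finally show ?thesis .
qed

lemma ln_lo_bound: "\<bar>ln (w 0 * c0 * exp (- ((norm y)\<^sup>2 + R\<^sup>2) / \<epsilon>))\<bar> \<le> \<bar>ln (w 0 * c0)\<bar> + ((norm y)\<^sup>2 + R\<^sup>2) / \<epsilon>"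
proof -
  have "ln (w 0 * c0 * exp (- ((norm y)\<^sup>2 + R\<^sup>2) / \<epsilon>)) = ln (w 0 * c0) - ((norm y)\<^sup>2 + R\<^sup>2) / \<epsilon>"
    using w0_pos c0_pos eps by (simp add: ln_mult field_simps)
  moreover have "((norm y)\<^sup>2 + R\<^sup>2) / \<epsilon> \<ge> 0" using eps by simp
  ultimately show ?thesis by linarith
qed

lemma ln_mm_bound:
  assumes p: "\<And>k. k < N \<Longrightarrow> norm (p k) \<le> R"
  shows "\<bar>ln (mm \<epsilon> N w (p::nat\<Rightarrow>real^'n) y)\<bar> \<le> K0 R + (norm y)\<^sup>2 / \<epsilon>"
proof -
  have "\<bar>ln (mm \<epsilon> N w (p::nat\<Rightarrow>real^'n) y)\<bar> \<le> \<bar>ln (w 0 * c0 * exp (- ((norm y)\<^sup>2 + R\<^sup>2) / \<epsilon>))\<bar> + \<bar>ln (WW * c0)\<bar>"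
    using w0_pos c0_pos mm_lower[where p=p, OF p] mm_upper by (intro ln_abs_between) auto
  also have "\<dots> \<le> \<bar>ln (w 0 * c0)\<bar> + ((norm y)\<^sup>2 + R\<^sup>2) / \<epsilon> + \<bar>ln (WW * c0)\<bar>"
    using ln_lo_bound by simp
  also have "\<dots> = K0 R + (norm y)\<^sup>2 / \<epsilon>" by (simp add: K0_def add_divide_distrib)
  finally show ?thesis .
qed

lemma K0_nonneg: "R \<ge> 0 \<Longrightarrow> K0 R \<ge> 0" unfolding K0_def using eps by simp

lemma mm_diff:
  assumes p: "\<And>k. k < N \<Longrightarrow> norm (p k) \<le> R" and q: "\<And>k. k < N \<Longrightarrow> norm (q k) \<le> R"
    and d: "\<And>k. k < N \<Longrightarrow> norm (p k - q k) \<le> \<delta>"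
  shows "\<bar>mm \<epsilon> N w (p::nat\<Rightarrow>real^'n) y - mm \<epsilon> N w (q::nat\<Rightarrow>real^'n) y\<bar> \<le> \<delta> * (WW * Bp R y)"
proof -
  have Bn: "Bp R y \<ge> 0" if "R \<ge> 0" unfolding Bp_def using c0_pos eps that by simp
  have "\<bar>mm \<epsilon> N w (p::nat\<Rightarrow>real^'n) y - mm \<epsilon> N w (q::nat\<Rightarrow>real^'n) y\<bar> = \<bar>\<Sum>k<N. w k * (psi \<epsilon> (y - p k) - psi \<epsilon> (y - q k))\<bar>"
    by (simp add: mm_def sum_subtractf[symmetric] algebra_simps)
  also have "\<dots> \<le> (\<Sum>k<N. \<bar>w k * (psi \<epsilon> (y - p k) - psi \<epsilon> (y - q k))\<bar>)" by (rule sum_abs)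
  also have "\<dots> \<le> (\<Sum>k<N. w k * (\<delta> * Bp R y))"
  proof (intro sum_mono)
    fix k assume k: "k \<in> {..<N}"
    have "\<bar>psi \<epsilon> (y - p k) - psi \<epsilon> (y - q k)\<bar> \<le> norm (p k - q k) * Bp R y"
      using psi_diff_bound0[OF p q] k unfolding Bp_def c0_def by auto
    also have "\<dots> \<le> \<delta> * Bp R y"
    proof -
      have "norm (p k) \<le> R" using p k by auto
      then have "R \<ge> 0" using norm_ge_zero[of "p k"] by linarith
      then show ?thesis using d[of k] k Bn by (intro mult_right_mono) auto
    qed
    finally show "\<bar>w k * (psi \<epsilon> (y - p k) - psi \<epsilon> (y - q k))\<bar> \<le> w k * (\<delta> * Bp R y)"
      using wpos[of k] k by (simp add: abs_mult mult_left_mono)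
  qed
  also have "\<dots> = (\<Sum>k<N. w k) * (\<delta> * Bp R y)" by (rule sum_distrib_right[symmetric])
  also have "\<dots> = \<delta> * (WW * Bp R y)" by (simp add: WW_def)
  finally show ?thesis .
qed

definition "gd R y = WW * Bp R y * (1 + K0 R + (norm y)\<^sup>2 / \<epsilon>)"

lemma phi_mm_diff:
  assumes p: "\<And>k. k < N \<Longrightarrow> norm (p k) \<le> R" and q: "\<And>k. k < N \<Longrightarrow> norm (q k) \<le> R"
    and d: "\<And>k. k < N \<Longrightarrow> norm (p k - q k) \<le> \<delta>"
  shows "\<bar>phi (mm \<epsilon> N w (p::nat\<Rightarrow>real^'n) y) - phi (mm \<epsilon> N w (q::nat\<Rightarrow>real^'n) y)\<bar> \<le> \<delta> * gd R y"
proof -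
  define lo where "lo = w 0 * c0 * exp (- ((norm y)\<^sup>2 + R\<^sup>2) / \<epsilon>)"
  have lo: "lo > 0" unfolding lo_def using w0_pos c0_pos by simp
  have R: "R \<ge> 0" using p[OF Npos] norm_ge_zero[of "p 0"] by linarith
  have "\<bar>phi (mm \<epsilon> N w (p::nat\<Rightarrow>real^'n) y) - phi (mm \<epsilon> N w (q::nat\<Rightarrow>real^'n) y)\<bar>
      \<le> \<bar>mm \<epsilon> N w (p::nat\<Rightarrow>real^'n) y - mm \<epsilon> N w (q::nat\<Rightarrow>real^'n) y\<bar> * (1 + \<bar>ln lo\<bar> + \<bar>ln (WW * c0)\<bar>)"
  proof (rule phi_lip[OF lo])
    show "lo \<le> mm \<epsilon> N w p y" unfolding lo_def by (rule mm_lower[where p=p, OF p])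
    show "lo \<le> mm \<epsilon> N w q y" unfolding lo_def by (rule mm_lower[where p=q, OF q])
  qed (rule mm_upper)+
  also have "\<dots> \<le> (\<delta> * (WW * Bp R y)) * (1 + K0 R + (norm y)\<^sup>2 / \<epsilon>)"
  proof (rule mult_mono)
    show "\<bar>mm \<epsilon> N w (p::nat\<Rightarrow>real^'n) y - mm \<epsilon> N w (q::nat\<Rightarrow>real^'n) y\<bar> \<le> \<delta> * (WW * Bp R y)" by (rule mm_diff[where p=p and q=q, OF p q d])
    have "\<bar>ln lo\<bar> \<le> \<bar>ln (w 0 * c0)\<bar> + ((norm y)\<^sup>2 + R\<^sup>2) / \<epsilon>" unfolding lo_def by (rule ln_lo_bound)
    then show "1 + \<bar>ln lo\<bar> + \<bar>ln (WW * c0)\<bar> \<le> 1 + K0 R + (norm y)\<^sup>2 / \<epsilon>"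
      by (simp add: K0_def add_divide_distrib)
    show "0 \<le> \<delta> * (WW * Bp R y)" using mm_diff[where p=p and q=q, OF p q d, of y] by linarith
    show "0 \<le> 1 + \<bar>ln lo\<bar> + \<bar>ln (WW * c0)\<bar>" by simp
  qed
  also have "\<dots> = \<delta> * gd R y" by (simp add: gd_def)
  finally show ?thesis .
qed

lemma gd_shape: "(W::real) * (c * e1 * ((r + R) / e) * e2) * Q = (W * c * e1 / e * e2) * ((r + R) * Q)"
  by (simp add: divide_inverse mult_ac)

lemma gd_shape2: "((a::real) * e) * (A * u) = (a * A) * (u * e)"
  by (simp add: mult_ac)

lemma gd_bound: "R \<ge> 0 \<Longrightarrow> \<bar>gd R y\<bar> \<le> (WW * c0 * exp (R\<^sup>2 / (2*\<epsilon>)) / \<epsilon> * ((1 + R) * (1 + K0 R + 1/\<epsilon>))) * HH y"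
proof -
  assume R: "R \<ge> 0"
  let ?r = "norm y"
  have K: "1 + K0 R \<ge> 0" using K0_nonneg[OF R] by simp
  have pa: "?r + R \<le> (1 + R) * (1 + ?r)" using poly_a[of ?r R] R by simp
  have pb: "1 + K0 R + ?r\<^sup>2 / \<epsilon> \<le> (1 + K0 R + 1/\<epsilon>) * (1 + ?r)\<^sup>2"
    using poly_b[of ?r "1 + K0 R" \<epsilon>] K eps by simp
  have "(?r + R) * (1 + K0 R + ?r\<^sup>2 / \<epsilon>) \<le> ((1 + R) * (1 + ?r)) * ((1 + K0 R + 1/\<epsilon>) * (1 + ?r)\<^sup>2)"
    using pa pb K R eps by (intro mult_mono) auto
  also have "\<dots> = (1 + R) * (1 + K0 R + 1/\<epsilon>) * (1 + ?r)^3"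
    by (rule prod3)
  finally have P: "(?r + R) * (1 + K0 R + ?r\<^sup>2 / \<epsilon>) \<le> (1 + R) * (1 + K0 R + 1/\<epsilon>) * (1 + ?r)^3" .
  define e1 where "e1 = exp (R\<^sup>2 / (2*\<epsilon>))"
  define e2 where "e2 = exp (- (norm y)\<^sup>2 / (4*\<epsilon>))"
  have pos: "0 \<le> WW * c0 * e1 / \<epsilon> * e2"
    using WW_pos c0_pos eps unfolding e1_def e2_def by simp
  have "gd R y = WW * (c0 * e1 * ((?r + R) / \<epsilon>) * e2) * (1 + K0 R + ?r\<^sup>2 / \<epsilon>)"
    unfolding gd_def Bp_def e1_def e2_def by (rule refl)
  also have "\<dots> = (WW * c0 * e1 / \<epsilon> * e2) * ((?r + R) * (1 + K0 R + ?r\<^sup>2 / \<epsilon>))"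
    by (rule gd_shape)
  finally have g1: "gd R y = (WW * c0 * e1 / \<epsilon> * e2) * ((?r + R) * (1 + K0 R + ?r\<^sup>2 / \<epsilon>))" .
  have "0 \<le> (?r + R) * (1 + K0 R + ?r\<^sup>2 / \<epsilon>)" using K0_nonneg[OF R] R eps by simp
  with pos have g0: "gd R y \<ge> 0" unfolding g1 by (rule mult_nonneg_nonneg)
  have "gd R y \<le> (WW * c0 * e1 / \<epsilon> * e2) * ((1 + R) * (1 + K0 R + 1/\<epsilon>) * (1 + ?r)^3)"
    unfolding g1 using P pos by (rule mult_left_mono)
  also have "\<dots> = (WW * c0 * e1 / \<epsilon> * ((1 + R) * (1 + K0 R + 1/\<epsilon>))) * ((1 + ?r)^3 * e2)"
    by (rule gd_shape2)
  also have "\<dots> = (WW * c0 * exp (R\<^sup>2 / (2*\<epsilon>)) / \<epsilon> * ((1 + R) * (1 + K0 R + 1/\<epsilon>))) * HH y"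
    unfolding HH_def e1_def e2_def by (rule refl)
  finally show ?thesis using g0 by simp
qed

lemma gd_integrable:
  assumes R: "R \<ge> 0" shows "integrable lborel (gd R)"
proof (rule int_by_HH)
  show "gd R \<in> borel_measurable lborel" unfolding gd_def[abs_def] Bp_def[abs_def] by measurable
  show "norm (gd R y) \<le> (WW * c0 * exp (R\<^sup>2 / (2*\<epsilon>)) / \<epsilon> * ((1 + R) * (1 + K0 R + 1/\<epsilon>))) * HH y" for y
    using gd_bound[OF R] by (simp only: real_norm_def)
qed


lemma R_nonneg_of: "(\<And>k. k < N \<Longrightarrow> norm (p k) \<le> R) \<Longrightarrow> R \<ge> 0"
proof -
  assume p: "\<And>k. k < N \<Longrightarrow> norm (p k) \<le> R"
  have "norm (p 0) \<le> R" using p Npos by auto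
  then show ?thesis using norm_ge_zero[of "p 0"] by linarith
qed

lemma int_phi_mm:
  assumes p: "\<And>k. k < N \<Longrightarrow> norm ((p::nat\<Rightarrow>real^'n) k) \<le> R"
  shows "integrable lborel (\<lambda>y. phi (mm \<epsilon> N w p y))"
proof (rule int_by_HH)
  show "(\<lambda>y. phi (mm \<epsilon> N w p y)) \<in> borel_measurable lborel" by measurable
  have R: "R \<ge> 0" by (rule R_nonneg_of[OF p])
  fix y :: "real^'n"
  let ?r = "norm y"
  define e1 where "e1 = exp (R\<^sup>2 / (2*\<epsilon>))"
  define e2 where "e2 = exp (- (norm y)\<^sup>2 / (4*\<epsilon>))"
  have m0: "mm \<epsilon> N w p y > 0" by (rule mm_pos)
  have m1: "mm \<epsilon> N w p y \<le> WW * (c0 * e1 * e2)" unfolding e1_def e2_def by (rule mm_decay[OF p])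
  have l1: "\<bar>ln (mm \<epsilon> N w p y)\<bar> \<le> K0 R + ?r\<^sup>2 / \<epsilon>" by (rule ln_mm_bound[OF p])
  have "K0 R + ?r\<^sup>2 / \<epsilon> \<le> (K0 R + 1/\<epsilon>) * (1 + ?r)\<^sup>2"
    using poly_b[of ?r "K0 R" \<epsilon>] K0_nonneg[OF R] eps by simp
  also have "\<dots> \<le> (K0 R + 1/\<epsilon>) * (1 + ?r)^3"
    using poly_c(2)[of ?r] K0_nonneg[OF R] eps by (intro mult_left_mono) auto
  finally have l2: "\<bar>ln (mm \<epsilon> N w p y)\<bar> \<le> (K0 R + 1/\<epsilon>) * (1 + ?r)^3" using l1 by linarith
  have "norm (phi (mm \<epsilon> N w p y)) = mm \<epsilon> N w p y * \<bar>ln (mm \<epsilon> N w p y)\<bar>"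
    using m0 by (simp add: phi_def abs_mult)
  also have "\<dots> \<le> (WW * (c0 * e1 * e2)) * ((K0 R + 1/\<epsilon>) * (1 + ?r)^3)"
    using m0 m1 l2 by (intro mult_mono) auto
  also have "\<dots> = (WW * c0 * e1 * (K0 R + 1/\<epsilon>)) * HH y"
    unfolding HH_def e2_def[symmetric] by (simp only: mult_ac)
  finally show "norm (phi (mm \<epsilon> N w p y)) \<le> (WW * c0 * e1 * (K0 R + 1/\<epsilon>)) * HH y" .
qed

lemma Bp_le_gd: "R \<ge> 0 \<Longrightarrow> Bp R y \<le> gd R y / WW"
proof -
  assume R: "R \<ge> 0"
  have B0: "Bp R y \<ge> 0" unfolding Bp_def using c0_pos eps R by simp
  have "Bp R y * 1 \<le> Bp R y * (1 + K0 R + (norm y)\<^sup>2 / \<epsilon>)"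
    using B0 K0_nonneg[OF R] eps by (intro mult_left_mono) auto
  moreover have "gd R y / WW = Bp R y * (1 + K0 R + (norm y)\<^sup>2 / \<epsilon>)" unfolding gd_def using WW_pos by simp
  ultimately show ?thesis by simp
qed

lemma int_V:
  assumes p: "\<And>k. k < N \<Longrightarrow> norm ((p::nat\<Rightarrow>real^'n) k) \<le> R" and k: "k < N"
  shows "integrable lborel (\<lambda>y. ln (mm \<epsilon> N w p y) *\<^sub>R ((psi \<epsilon> (y - p k) / \<epsilon>) *\<^sub>R (y - p k)))"
proof (rule Bochner_Integration.integrable_bound)
  have R: "R \<ge> 0" by (rule R_nonneg_of[OF p])
  show "integrable lborel (\<lambda>y. gd R y / WW)" using gd_integrable[OF R] by (rule integrable_divide)
  show "(\<lambda>y. ln (mm \<epsilon> N w p y) *\<^sub>R ((psi \<epsilon> (y - p k) / \<epsilon>) *\<^sub>R (y - p k))) \<in> borel_measurable lborel"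
    by measurable
  show "AE y in lborel. norm (ln (mm \<epsilon> N w p y) *\<^sub>R ((psi \<epsilon> (y - p k) / \<epsilon>) *\<^sub>R (y - p k))) \<le> norm (gd R y / WW)"
  proof (rule AE_I2)
    fix y :: "real^'n"
    let ?r = "norm y"
    define e1 where "e1 = exp (R\<^sup>2 / (2*\<epsilon>))"
    define e2 where "e2 = exp (- (norm y)\<^sup>2 / (4*\<epsilon>))"
    have ps: "psi \<epsilon> (y - p k) \<le> c0 * e1 * e2" unfolding e1_def e2_def using p k by (intro psi_decay0) auto
    have ps0: "psi \<epsilon> (y - p k) > 0" by (rule psi_pos0)
    have ny: "norm (y - p k) \<le> ?r + R" using norm_triangle_ineq4[of y "p k"] p[OF k] by linarith
    have l1: "\<bar>ln (mm \<epsilon> N w p y)\<bar> \<le> K0 R + ?r\<^sup>2 / \<epsilon>" by (rule ln_mm_bound[OF p])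
    have "norm (ln (mm \<epsilon> N w p y) *\<^sub>R ((psi \<epsilon> (y - p k) / \<epsilon>) *\<^sub>R (y - p k)))
        = \<bar>ln (mm \<epsilon> N w p y)\<bar> * (psi \<epsilon> (y - p k) / \<epsilon> * norm (y - p k))"
      using ps0 eps by (simp add: abs_mult)
    also have "\<dots> \<le> (1 + K0 R + ?r\<^sup>2 / \<epsilon>) * (c0 * e1 * e2 / \<epsilon> * (?r + R))"
      using l1 ps ps0 ny eps by (intro mult_mono divide_right_mono mult_nonneg_nonneg) auto
    also have "\<dots> = Bp R y * (1 + K0 R + ?r\<^sup>2 / \<epsilon>)"
      unfolding Bp_def e1_def[symmetric] e2_def[symmetric] by (simp add: divide_inverse mult_ac)
    also have "\<dots> = gd R y / WW" unfolding gd_def using WW_pos by simp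
    also have "\<dots> \<le> norm (gd R y / WW)" by (simp only: real_norm_def abs_ge_self)
    finally show "norm (ln (mm \<epsilon> N w p y) *\<^sub>R ((psi \<epsilon> (y - p k) / \<epsilon>) *\<^sub>R (y - p k))) \<le> norm (gd R y / WW)" .
  qed
qed

lemma int_Z:
  fixes a u :: "real^'n"
  shows "integrable lborel (\<lambda>y. psi \<epsilon> (y - a) / \<epsilon> * ((y - a) \<bullet> u))"
proof (rule Bochner_Integration.integrable_bound)
  define R where "R = norm a"
  have R: "R \<ge> 0" by (simp add: R_def)
  show "integrable lborel (\<lambda>y. norm u * (gd R y / WW))" using gd_integrable[OF R]
    by (intro integrable_mult_right integrable_divide)
  show "(\<lambda>y. psi \<epsilon> (y - a) / \<epsilon> * ((y - a) \<bullet> u)) \<in> borel_measurable lborel" by measurable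
  show "AE y in lborel. norm (psi \<epsilon> (y - a) / \<epsilon> * ((y - a) \<bullet> u)) \<le> norm (norm u * (gd R y / WW))"
  proof (rule AE_I2)
    fix y :: "real^'n"
    let ?r = "norm y"
    define e1 where "e1 = exp (R\<^sup>2 / (2*\<epsilon>))"
    define e2 where "e2 = exp (- (norm y)\<^sup>2 / (4*\<epsilon>))"
    have ps: "psi \<epsilon> (y - a) \<le> c0 * e1 * e2"
      unfolding R_def e1_def e2_def by (rule psi_decay0) simp
    have ps0: "psi \<epsilon> (y - a) > 0" by (rule psi_pos0)
    have ny: "norm (y - a) \<le> ?r + R" using norm_triangle_ineq4[of y a] unfolding R_def by linarith
    have "norm (psi \<epsilon> (y - a) / \<epsilon> * ((y - a) \<bullet> u)) \<le> psi \<epsilon> (y - a) / \<epsilon> * (norm (y - a) * norm u)"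
    proof -
      have "norm (psi \<epsilon> (y - a) / \<epsilon> * ((y - a) \<bullet> u)) = psi \<epsilon> (y - a) / \<epsilon> * \<bar>(y - a) \<bullet> u\<bar>"
        using ps0 eps by (simp add: abs_mult)
      also have "\<dots> \<le> psi \<epsilon> (y - a) / \<epsilon> * (norm (y - a) * norm u)"
        using ps0 eps Cauchy_Schwarz_ineq2[of "y - a" u] by (intro mult_left_mono) auto
      finally show ?thesis .
    qed
    also have "\<dots> \<le> (c0 * e1 * e2) / \<epsilon> * ((?r + R) * norm u)"
    proof (rule mult_mono)
      show "psi \<epsilon> (y - a) / \<epsilon> \<le> (c0 * e1 * e2) / \<epsilon>"
        using ps eps by (rule divide_right_mono[OF _ less_imp_le])
      show "norm (y - a) * norm u \<le> (?r + R) * norm u" using ny by (rule mult_right_mono) simp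
      show "0 \<le> (c0 * e1 * e2) / \<epsilon>"
        using c0_pos eps unfolding e1_def e2_def by simp
      show "0 \<le> norm (y - a) * norm u" by simp
    qed
    also have "\<dots> = norm u * Bp R y" unfolding Bp_def e1_def[symmetric] e2_def[symmetric] by (simp add: divide_inverse mult_ac)
    also have "\<dots> \<le> norm u * (gd R y / WW)" using Bp_le_gd[OF R] by (intro mult_left_mono) auto
    also have "\<dots> \<le> norm (norm u * (gd R y / WW))" by (simp only: real_norm_def abs_ge_self)
    finally show "norm (psi \<epsilon> (y - a) / \<epsilon> * ((y - a) \<bullet> u)) \<le> norm (norm u * (gd R y / WW))" .
  qed
qed


lemma phi_mm_deriv:
  fixes v :: "nat \<Rightarrow> real \<Rightarrow> real^'n" and vd :: "nat \<Rightarrow> real^'n"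
  assumes vd: "\<And>k. k < N \<Longrightarrow> (v k has_vector_derivative vd k) (at t)"
  shows "((\<lambda>s. phi (mm \<epsilon> N w (\<lambda>k. v k s) y)) has_real_derivative
     ((ln (mm \<epsilon> N w (\<lambda>k. v k t) y) + 1) * (\<Sum>k<N. w k * (psi \<epsilon> (y - v k t) / \<epsilon> * ((y - v k t) \<bullet> vd k))))) (at t)"
proof -
  have m: "((\<lambda>s. mm \<epsilon> N w (\<lambda>k. v k s) y) has_real_derivative
      (\<Sum>k<N. w k * (psi \<epsilon> (y - v k t) / \<epsilon> * ((y - v k t) \<bullet> vd k)))) (at t)"
    unfolding mm_def
    by (intro DERIV_sum DERIV_cmult psi_comp_deriv[OF eps] vd) auto
  have p: "DERIV phi (mm \<epsilon> N w (\<lambda>k. v k t) y) :> (ln (mm \<epsilon> N w (\<lambda>k. v k t) y) + 1)"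
    unfolding phi_def using mm_pos[of "\<lambda>k. v k t" y]
    by (auto intro!: derivative_eq_intros)
  show ?thesis using DERIV_chain2[OF p m] .
qed

lemma lip_at:
  fixes f :: "real \<Rightarrow> real^'n"
  assumes "(f has_vector_derivative f') (at t)"
  shows "eventually (\<lambda>s. norm (f s - f t) \<le> (norm f' + 1) * \<bar>s - t\<bar>) (at t)"
proof -
  from assms have "(f has_derivative (\<lambda>h. h *\<^sub>R f')) (at t)" by (simp add: has_vector_derivative_def)
  then obtain d where d: "d > 0" and
    dd: "\<And>x'. 0 < norm (x' - t) \<Longrightarrow> norm (x' - t) < d \<Longrightarrow>
       norm (f x' - f t - (x' - t) *\<^sub>R f') / norm (x' - t) < 1"
    unfolding has_derivative_at' by (meson zero_less_one)
  show ?thesis unfolding eventually_at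
  proof (intro exI[of _ d] conjI ballI impI)
    show "d > 0" by (rule d)
    fix s :: real assume s: "s \<in> UNIV" "s \<noteq> t \<and> dist s t < d"
    have s0: "0 < norm (s - t)" "norm (s - t) < d" using s by (auto simp: dist_norm)
    have "norm (f s - f t - (s - t) *\<^sub>R f') < norm (s - t)"
      using dd[OF s0] s0 by (simp add: divide_less_eq)
    then have "norm (f s - f t) \<le> norm ((s - t) *\<^sub>R f') + norm (s - t)"
      using norm_triangle_ineq2[of "f s - f t" "(s - t) *\<^sub>R f'"] by linarith
    then have "norm (f s - f t) \<le> \<bar>s - t\<bar> * norm f' + \<bar>s - t\<bar>" by simp
    then show "norm (f s - f t) \<le> (norm f' + 1) * \<bar>s - t\<bar>"
      by (simp add: distrib_left distrib_right mult.commute)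
  qed
qed

lemma entropy_deriv:
  fixes v :: "nat \<Rightarrow> real \<Rightarrow> real^'n" and vd :: "nat \<Rightarrow> real^'n"
  assumes vd: "\<And>k. k < N \<Longrightarrow> (v k has_vector_derivative vd k) (at t)"
  shows "((\<lambda>s. entropyN \<epsilon> N w v s) has_real_derivative
     (\<integral>y. (ln (mm \<epsilon> N w (\<lambda>k. v k t) y) + 1) * (\<Sum>k<N. w k * (psi \<epsilon> (y - v k t) / \<epsilon> * ((y - v k t) \<bullet> vd k))) \<partial>lborel)) (at t)"
proof -
  define P where "P s = (\<lambda>k. v k s)" for s
  define D where "D y = (ln (mm \<epsilon> N w (P t) y) + 1) * (\<Sum>k<N. w k * (psi \<epsilon> (y - v k t) / \<epsilon> * ((y - v k t) \<bullet> vd k)))" for y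
  define Q where "Q s y = (phi (mm \<epsilon> N w (P s) y) - phi (mm \<epsilon> N w (P t) y)) / (s - t)" for s y
  have E: "entropyN \<epsilon> N w v s = (\<integral>y. phi (mm \<epsilon> N w (P s) y) \<partial>lborel)" for s
    by (simp add: entropyN_def mollified_mm P_def phi_def)
  have Pb: "norm (P s k) \<le> (\<Sum>j<N. norm (P s j))" if "k < N" for s k
    using that by (intro member_le_sum[of k "{..<N}" "\<lambda>j. norm (P s j)"]) auto
  have intP: "integrable lborel (\<lambda>y. phi (mm \<epsilon> N w (P s) y))" for s
    by (rule int_phi_mm[OF Pb])
  define L where "L = (\<Sum>k<N. norm (vd k) + 1)"
  have Lk: "norm (vd k) + 1 \<le> L" if "k < N" for k
    unfolding L_def using that by (intro member_le_sum[of k "{..<N}" "\<lambda>j. norm (vd j) + 1"]) auto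
  have Lpos: "L > 0" using Lk[OF Npos] by (smt (verit) norm_ge_zero)
  define R where "R = 1 + (\<Sum>k<N. norm (v k t))"
  have ev1: "eventually (\<lambda>s. \<forall>k\<in>{..<N}. norm (v k s - v k t) \<le> (norm (vd k) + 1) * \<bar>s - t\<bar>) (at t)"
    using vd by (intro eventually_ball_finite ballI lip_at) auto
  have ev2: "eventually (\<lambda>s. \<bar>s - t\<bar> < 1 / L) (at t)"
    unfolding eventually_at using Lpos by (intro exI[of _ "1/L"]) (auto simp: dist_real_def)
  have bound: "eventually (\<lambda>s. \<forall>y. \<bar>Q s y\<bar> \<le> L * gd R y) (at t)"
    using ev1 ev2
  proof eventually_elim
    case (elim s)
    have R0: "R \<ge> 0" unfolding R_def by (simp add: sum_nonneg)
    have dk: "norm (P s k - P t k) \<le> L * \<bar>s - t\<bar>" if k: "k < N" for k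
    proof -
      have "norm (P s k - P t k) \<le> (norm (vd k) + 1) * \<bar>s - t\<bar>" using elim(1) k by (auto simp: P_def)
      also have "\<dots> \<le> L * \<bar>s - t\<bar>" using Lk[OF k] by (intro mult_right_mono) auto
      finally show ?thesis .
    qed
    have tb: "norm (P t k) \<le> R" if k: "k < N" for k
      using Pb[OF k, of t] unfolding R_def P_def by simp
    have sb: "norm (P s k) \<le> R" if k: "k < N" for k
    proof -
      have "L * \<bar>s - t\<bar> \<le> 1" using elim(2) Lpos by (simp add: field_simps)
      then have "norm (P s k - P t k) \<le> 1" using dk[OF k] by linarith
      moreover have "norm (P s k) \<le> norm (P s k - P t k) + norm (P t k)"
        by (metis diff_add_cancel norm_triangle_ineq)
      moreover have "norm (P t k) \<le> (\<Sum>j<N. norm (P t j))" by (rule Pb[OF k])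
      ultimately show ?thesis unfolding R_def P_def by simp
    qed
    show ?case
    proof
      fix y
      have g0: "gd R y \<ge> 0" using gd_bound[OF R0, of y] abs_ge_zero[of "gd R y"]
        unfolding gd_def Bp_def using WW_pos c0_pos eps R0 K0_nonneg[OF R0]
        by (intro mult_nonneg_nonneg add_nonneg_nonneg) auto
      show "\<bar>Q s y\<bar> \<le> L * gd R y"
      proof (cases "s = t")
        case True then show ?thesis using g0 Lpos by (simp add: Q_def)
      next
        case False
        have "\<bar>phi (mm \<epsilon> N w (P s) y) - phi (mm \<epsilon> N w (P t) y)\<bar> \<le> (L * \<bar>s - t\<bar>) * gd R y"
          by (rule phi_mm_diff[OF sb tb dk])
        then show ?thesis using False unfolding Q_def
          by (simp add: abs_divide divide_le_eq mult_ac)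
      qed
    qed
  qed
  have lim: "((\<lambda>s. Q s y) \<longlongrightarrow> D y) (at t)" for y
  proof -
    have "((\<lambda>s. phi (mm \<epsilon> N w (P s) y)) has_real_derivative D y) (at t)"
      unfolding P_def D_def by (rule phi_mm_deriv[OF vd])
    then show ?thesis unfolding has_field_derivative_iff Q_def .
  qed
  have "((\<lambda>s. integral\<^sup>L lborel (Q s)) \<longlongrightarrow> integral\<^sup>L lborel D) (at t)"
  proof (rule dom_conv_at[OF _ _ _ lim bound])
    show "Q s \<in> borel_measurable lborel" for s unfolding Q_def[abs_def] by measurable
    show "D \<in> borel_measurable lborel" unfolding D_def[abs_def] by measurable
    show "integrable lborel (\<lambda>y. L * gd R y)"
      using gd_integrable[of R] unfolding R_def by (intro integrable_mult_right) (simp add: sum_nonneg)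
  qed
  moreover have "integral\<^sup>L lborel (Q s) = (entropyN \<epsilon> N w v s - entropyN \<epsilon> N w v t) / (s - t)" for s
    unfolding Q_def E using intP by simp
  ultimately show ?thesis unfolding has_field_derivative_iff D_def P_def by simp
qed


lemma gradE_eq:
  fixes v :: "nat \<Rightarrow> real \<Rightarrow> real^'n" and x :: "real^'n"
  shows "gradE \<epsilon> N w v t x = (\<integral>y. ln (mm \<epsilon> N w (\<lambda>k. v k t) y) *\<^sub>R ((psi \<epsilon> (y - x) / \<epsilon>) *\<^sub>R (y - x)) \<partial>lborel)"
  unfolding gradE_def mollified_mm
proof (rule Bochner_Integration.integral_cong[OF refl])
  fix y :: "real^'n"
  have "grad_psi \<epsilon> (x - y) = (psi \<epsilon> (y - x) / \<epsilon>) *\<^sub>R (y - x)"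
    unfolding grad_psi_eq[OF eps] psi_sym[of \<epsilon> x y]
    by (simp only: scaleR_minus_left scaleR_minus_right[symmetric] minus_diff_eq)
  then show "ln (mm \<epsilon> N w (\<lambda>k. v k t) y) *\<^sub>R grad_psi \<epsilon> (x - y) =
      ln (mm \<epsilon> N w (\<lambda>k. v k t) y) *\<^sub>R ((psi \<epsilon> (y - x) / \<epsilon>) *\<^sub>R (y - x))" by simp
qed

lemma intD:
  fixes x :: "nat \<Rightarrow> real^'n" and vd :: "nat \<Rightarrow> real^'n"
  shows "(\<integral>y. (ln (mm \<epsilon> N w x y) + 1) * (\<Sum>k<N. w k * (psi \<epsilon> (y - x k) / \<epsilon> * ((y - x k) \<bullet> vd k))) \<partial>lborel)
    = (\<Sum>k<N. w k * ((\<integral>y. ln (mm \<epsilon> N w x y) *\<^sub>R ((psi \<epsilon> (y - x k) / \<epsilon>) *\<^sub>R (y - x k)) \<partial>lborel) \<bullet> vd k))"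
proof -
  define R where "R = (\<Sum>j<N. norm (x j))"
  have xb: "norm (x k) \<le> R" if "k < N" for k
    unfolding R_def using that by (intro member_le_sum[of k "{..<N}" "\<lambda>j. norm (x j)"]) auto
  define V where "V k y = ln (mm \<epsilon> N w x y) *\<^sub>R ((psi \<epsilon> (y - x k) / \<epsilon>) *\<^sub>R (y - x k))" for k y
  define Z where "Z k y = psi \<epsilon> (y - x k) / \<epsilon> * ((y - x k) \<bullet> vd k)" for k y
  have intV: "integrable lborel (V k)" if "k < N" for k
    unfolding V_def[abs_def] by (rule int_V[OF xb that])
  have intZ: "integrable lborel (Z k)" for k
    unfolding Z_def[abs_def] by (rule int_Z)
  have pw: "(ln (mm \<epsilon> N w x y) + 1) * (\<Sum>k<N. w k * Z k y)
      = (\<Sum>k<N. w k * (V k y \<bullet> vd k)) + (\<Sum>k<N. w k * Z k y)" for y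
  proof -
    have VZ: "V k y \<bullet> vd k = ln (mm \<epsilon> N w x y) * Z k y" for k
      unfolding V_def Z_def by simp
    have "(ln (mm \<epsilon> N w x y) + 1) * (\<Sum>k<N. w k * Z k y)
        = (\<Sum>k<N. w k * (ln (mm \<epsilon> N w x y) * Z k y) + w k * Z k y)"
      by (simp add: sum_distrib_left algebra_simps)
    also have "\<dots> = (\<Sum>k<N. w k * (ln (mm \<epsilon> N w x y) * Z k y)) + (\<Sum>k<N. w k * Z k y)"
      by (rule sum.distrib)
    finally show ?thesis by (simp only: VZ)
  qed
  have iA: "integrable lborel (\<lambda>y. \<Sum>k<N. w k * (V k y \<bullet> vd k))"
    using intV by (intro Bochner_Integration.integrable_sum integrable_mult_right integrable_inner_left) auto
  have iB: "integrable lborel (\<lambda>y. \<Sum>k<N. w k * Z k y)"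
    using intZ by (intro Bochner_Integration.integrable_sum integrable_mult_right) auto
  have "(\<integral>y. (ln (mm \<epsilon> N w x y) + 1) * (\<Sum>k<N. w k * Z k y) \<partial>lborel)
      = (\<integral>y. (\<Sum>k<N. w k * (V k y \<bullet> vd k)) \<partial>lborel) + (\<integral>y. (\<Sum>k<N. w k * Z k y) \<partial>lborel)"
    unfolding pw by (rule Bochner_Integration.integral_add[OF iA iB])
  also have "(\<integral>y. (\<Sum>k<N. w k * (V k y \<bullet> vd k)) \<partial>lborel) = (\<Sum>k<N. w k * (integral\<^sup>L lborel (V k) \<bullet> vd k))"
    using intV by (subst Bochner_Integration.integral_sum) (auto simp: integral_inner_left)
  also have "(\<integral>y. (\<Sum>k<N. w k * Z k y) \<partial>lborel) = 0"
  proof -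
    have z: "integral\<^sup>L lborel (Z k) = 0" for k unfolding Z_def by (rule zero_moment)
    have "(\<integral>y. (\<Sum>k<N. w k * Z k y) \<partial>lborel) = (\<Sum>k<N. (\<integral>y. w k * Z k y \<partial>lborel))"
      using intZ by (intro Bochner_Integration.integral_sum integrable_mult_right) auto
    also have "\<dots> = 0" by (simp add: z)
    finally show ?thesis .
  qed
  finally show ?thesis unfolding V_def Z_def by simp
qed

end



definition aop :: "real \<Rightarrow> real^'n \<Rightarrow> real^'n \<Rightarrow> real^'n" where
  "aop \<gamma> z u = (if z = 0 then 0 else (norm z powr \<gamma>) *\<^sub>R ((norm z)\<^sup>2 *\<^sub>R u - (z \<bullet> u) *\<^sub>R z))"

lemma Amat_mult: "Amat \<gamma> z *v u = aop \<gamma> z u"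
proof (cases "z = 0")
  case True then show ?thesis by (simp add: Amat_def aop_def)
next
  case False
  have "((norm z powr \<gamma>) *\<^sub>R ((norm z)\<^sup>2 *\<^sub>R mat 1 - outer z z)) *v u
      = (norm z powr \<gamma>) *\<^sub>R ((norm z)\<^sup>2 *\<^sub>R u - (z \<bullet> u) *\<^sub>R z)"
  proof -
    have o: "outer z z *v u = (z \<bullet> u) *\<^sub>R z"
      by (simp add: vec_eq_iff matrix_vector_mult_def outer_def inner_vec_def sum_distrib_left mult_ac)
    show ?thesis
      by (simp add: scaleR_matrix_vector_assoc[symmetric] matrix_vector_mult_diff_rdistrib o)
  qed
  then show ?thesis using False by (simp add: Amat_def aop_def)
qed

lemma Amat_neg: "Amat \<gamma> (- z) = Amat \<gamma> z"
  by (simp add: Amat_def outer_def)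

lemma aop_sym: "x \<bullet> aop \<gamma> z u = u \<bullet> aop \<gamma> z x"
  by (simp add: aop_def inner_diff_right algebra_simps inner_commute)

lemma aop_kernel: "z \<bullet> aop \<gamma> z u = 0"
  by (simp add: aop_def inner_diff_right power2_norm_eq_inner inner_commute)

lemma aop_psd: "u \<bullet> aop \<gamma> z u \<ge> 0"
proof (cases "z = 0")
  case True then show ?thesis by (simp add: aop_def)
next
  case False
  have cs: "(z \<bullet> u)\<^sup>2 \<le> (norm z)\<^sup>2 * (u \<bullet> u)"
  proof -
    have "\<bar>z \<bullet> u\<bar> \<le> norm z * norm u" by (rule Cauchy_Schwarz_ineq2)
    then have "\<bar>z \<bullet> u\<bar>\<^sup>2 \<le> (norm z * norm u)\<^sup>2" by (intro power_mono) auto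
    then show ?thesis by (simp add: power_mult_distrib power2_norm_eq_inner)
  qed
  have "u \<bullet> aop \<gamma> z u = (norm z powr \<gamma>) * ((norm z)\<^sup>2 * (u \<bullet> u) - (z \<bullet> u)\<^sup>2)"
    using False by (simp add: aop_def inner_diff_right power2_eq_square inner_commute)
  also have "\<dots> \<ge> 0" using cs by simp
  finally show ?thesis .
qed

lemma aop_minus: "aop \<gamma> z (- u) = - aop \<gamma> z u"
  by (simp add: aop_def algebra_simps)

lemma aop_diff: "aop \<gamma> z (a - b) = aop \<gamma> z a - aop \<gamma> z b"
  by (simp add: aop_def algebra_simps inner_diff_right)




lemma aop_neg: "aop \<gamma> (- z) (- u) = - aop \<gamma> z u"
  by (simp add: aop_def algebra_simps)

lemma aop_swap: "aop \<gamma> (b - a) (d - c) = - aop \<gamma> (a - b) (c - d)"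
  using aop_neg[of \<gamma> "a - b" "c - d"] by simp

lemma double_sum_sym:
  fixes f :: "nat \<Rightarrow> nat \<Rightarrow> 'a::real_vector"
  shows "2 *\<^sub>R (\<Sum>i<N. \<Sum>j<N. f i j) = (\<Sum>i<N. \<Sum>j<N. f i j + f j i)"
proof -
  have "(\<Sum>i<N. \<Sum>j<N. f j i) = (\<Sum>i<N. \<Sum>j<N. f i j)" by (rule sum.swap)
  then show ?thesis by (simp add: sum.distrib scaleR_2)
qed

lemma mom_zero:
  fixes x G :: "nat \<Rightarrow> real^'n"
  shows "(\<Sum>i<N. \<Sum>j<N. (w i * w j) *\<^sub>R aop \<gamma> (x i - x j) (G i - G j)) = 0"
proof -
  have t: "(w i * w j) *\<^sub>R aop \<gamma> (x i - x j) (G i - G j) + (w j * w i) *\<^sub>R aop \<gamma> (x j - x i) (G j - G i) = 0" for i j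
  proof -
    have s: "aop \<gamma> (x j - x i) (G j - G i) = - aop \<gamma> (x i - x j) (G i - G j)" by (rule aop_swap)
    show ?thesis unfolding s by (simp add: mult.commute)
  qed
  have "2 *\<^sub>R (\<Sum>i<N. \<Sum>j<N. (w i * w j) *\<^sub>R aop \<gamma> (x i - x j) (G i - G j))
      = (\<Sum>i<N. \<Sum>j<N. (w i * w j) *\<^sub>R aop \<gamma> (x i - x j) (G i - G j) + (w j * w i) *\<^sub>R aop \<gamma> (x j - x i) (G j - G i))"
    by (rule double_sum_sym)
  also have "\<dots> = 0" by (simp only: t sum.neutral_const)
  finally show ?thesis by simp
qed

lemma pair_term:
  fixes a b A :: "real^'n"
  shows "p * q * (a \<bullet> A) + q * p * (b \<bullet> - A) = p * q * ((a - b) \<bullet> A)"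
  by (simp add: inner_diff_left inner_minus_right algebra_simps)

lemma energy_zero:
  fixes x G :: "nat \<Rightarrow> real^'n"
  shows "(\<Sum>i<N. \<Sum>j<N. w i * w j * (x i \<bullet> aop \<gamma> (x i - x j) (G i - G j))) = 0"
proof -
  have t: "w i * w j * (x i \<bullet> aop \<gamma> (x i - x j) (G i - G j)) + w j * w i * (x j \<bullet> aop \<gamma> (x j - x i) (G j - G i)) = 0" for i j
  proof -
    have s: "aop \<gamma> (x j - x i) (G j - G i) = - aop \<gamma> (x i - x j) (G i - G j)" by (rule aop_swap)
    show ?thesis unfolding s pair_term aop_kernel by simp
  qed
  have "2 *\<^sub>R (\<Sum>i<N. \<Sum>j<N. w i * w j * (x i \<bullet> aop \<gamma> (x i - x j) (G i - G j)))
      = (\<Sum>i<N. \<Sum>j<N. w i * w j * (x i \<bullet> aop \<gamma> (x i - x j) (G i - G j)) + w j * w i * (x j \<bullet> aop \<gamma> (x j - x i) (G j - G i)))"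
    by (rule double_sum_sym)
  also have "\<dots> = 0" by (simp only: t sum.neutral_const)
  finally show ?thesis by simp
qed

lemma entropy_sum:
  fixes x G :: "nat \<Rightarrow> real^'n"
  shows "(\<Sum>i<N. \<Sum>j<N. w i * w j * (G i \<bullet> aop \<gamma> (x i - x j) (G i - G j)))
    = 1/2 * (\<Sum>i<N. \<Sum>j<N. w i * w j * ((G i - G j) \<bullet> aop \<gamma> (x i - x j) (G i - G j)))"
proof -
  have t: "w i * w j * (G i \<bullet> aop \<gamma> (x i - x j) (G i - G j)) + w j * w i * (G j \<bullet> aop \<gamma> (x j - x i) (G j - G i))
     = w i * w j * ((G i - G j) \<bullet> aop \<gamma> (x i - x j) (G i - G j))" for i j
  proof -
    have s: "aop \<gamma> (x j - x i) (G j - G i) = - aop \<gamma> (x i - x j) (G i - G j)" by (rule aop_swap)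
    show ?thesis unfolding s pair_term by (rule refl)
  qed
  have "2 *\<^sub>R (\<Sum>i<N. \<Sum>j<N. w i * w j * (G i \<bullet> aop \<gamma> (x i - x j) (G i - G j)))
      = (\<Sum>i<N. \<Sum>j<N. w i * w j * (G i \<bullet> aop \<gamma> (x i - x j) (G i - G j)) + w j * w i * (G j \<bullet> aop \<gamma> (x j - x i) (G j - G i)))"
    by (rule double_sum_sym)
  also have "\<dots> = (\<Sum>i<N. \<Sum>j<N. w i * w j * ((G i - G j) \<bullet> aop \<gamma> (x i - x j) (G i - G j)))"
    by (simp only: t)
  finally show ?thesis by simp
qed

lemma norm2_deriv:
  fixes f :: "real \<Rightarrow> real^'n"
  assumes "(f has_vector_derivative f') (at t)"
  shows "((\<lambda>s. (norm (f s))\<^sup>2) has_real_derivative 2 * (f t \<bullet> f')) (at t)"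
proof -
  have d: "(f has_derivative (\<lambda>h. h *\<^sub>R f')) (at t)" using assms by (simp add: has_vector_derivative_def)
  have "((\<lambda>s. f s \<bullet> f s) has_derivative (\<lambda>h. f t \<bullet> (h *\<^sub>R f') + (h *\<^sub>R f') \<bullet> f t)) (at t)"
    by (rule has_derivative_inner[OF d d])
  moreover have "(\<lambda>h. f t \<bullet> (h *\<^sub>R f') + (h *\<^sub>R f') \<bullet> f t) = (*) (2 * (f t \<bullet> f'))"
    by (auto simp: fun_eq_iff inner_commute)
  ultimately show ?thesis unfolding has_field_derivative_def power2_norm_eq_inner by simp
qed

lemma vd_scaleR:
  "(f has_vector_derivative f') F \<Longrightarrow> ((\<lambda>x. c *\<^sub>R f x) has_vector_derivative c *\<^sub>R f') F"
  unfolding has_vector_derivative_def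
  by (auto intro!: derivative_eq_intros simp: scaleR_left_commute)




theorem theorem10:
  fixes v :: "nat \<Rightarrow> real \<Rightarrow> real^'n" and w :: "nat \<Rightarrow> real"
    and N :: nat and \<epsilon> \<gamma> :: real and T :: "real set"
  assumes dim: "CARD('n) \<ge> 2"
    and eps: "\<epsilon> > 0"
    and wpos: "\<And>i. i < N \<Longrightarrow> w i > 0"
    and T: "open T"
    and ode: "\<And>i t. i < N \<Longrightarrow> t \<in> T \<Longrightarrow>
       (v i has_vector_derivative
          (- (\<Sum>j<N. w j *\<^sub>R (Amat \<gamma> (v i t - v j t) *v
                 (gradE \<epsilon> N w v t (v i t) - gradE \<epsilon> N w v t (v j t)))))) (at t)"
  shows "\<forall>t\<in>T.
      ((\<lambda>s. \<Sum>i<N. w i) has_real_derivative 0) (at t)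
    \<and> ((\<lambda>s. \<Sum>i<N. w i *\<^sub>R v i s) has_vector_derivative 0) (at t)
    \<and> ((\<lambda>s. \<Sum>i<N. w i * (norm (v i s))\<^sup>2) has_real_derivative 0) (at t)
    \<and> ((\<lambda>s. entropyN \<epsilon> N w v s) has_real_derivative (- dissipN \<gamma> \<epsilon> N w v t)) (at t)
    \<and> dissipN \<gamma> \<epsilon> N w v t \<ge> 0"
proof (intro ballI conjI)
  fix t assume t: "t \<in> T"
  define G where "G i = gradE \<epsilon> N w v t (v i t)" for i
  define vd where "vd i = - (\<Sum>j<N. w j *\<^sub>R (Amat \<gamma> (v i t - v j t) *v (G i - G j)))" for i
  have vdd: "(v i has_vector_derivative vd i) (at t)" if "i < N" for i
    using ode[OF that t] unfolding vd_def G_def .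
  have vd_aop: "vd i = - (\<Sum>j<N. w j *\<^sub>R aop \<gamma> (v i t - v j t) (G i - G j))" for i
    by (simp add: vd_def Amat_mult)
  have diss_eq: "dissipN \<gamma> \<epsilon> N w v t
      = 1/2 * (\<Sum>i<N. \<Sum>j<N. w i * w j * ((G i - G j) \<bullet> aop \<gamma> (v i t - v j t) (G i - G j)))"
    by (simp add: dissipN_def G_def Amat_mult)
  show "((\<lambda>s. \<Sum>i<N. w i) has_real_derivative 0) (at t)" by simp
  show "((\<lambda>s. \<Sum>i<N. w i *\<^sub>R v i s) has_vector_derivative 0) (at t)"
  proof -
    have "((\<lambda>s. \<Sum>i<N. w i *\<^sub>R v i s) has_vector_derivative (\<Sum>i<N. w i *\<^sub>R vd i)) (at t)"
      by (intro has_vector_derivative_sum vd_scaleR vdd) auto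
    moreover have "(\<Sum>i<N. w i *\<^sub>R vd i) = 0"
    proof -
      have "(\<Sum>i<N. w i *\<^sub>R vd i) = - (\<Sum>i<N. \<Sum>j<N. (w i * w j) *\<^sub>R aop \<gamma> (v i t - v j t) (G i - G j))"
        by (simp add: vd_aop scaleR_sum_right sum_negf)
      also have "\<dots> = 0" using mom_zero[where N=N and w=w and \<gamma>=\<gamma> and x="\<lambda>i. v i t" and G=G] by simp
      finally show ?thesis .
    qed
    ultimately show ?thesis by simp
  qed
  show "((\<lambda>s. \<Sum>i<N. w i * (norm (v i s))\<^sup>2) has_real_derivative 0) (at t)"
  proof -
    have "((\<lambda>s. \<Sum>i<N. w i * (norm (v i s))\<^sup>2) has_real_derivative (\<Sum>i<N. w i * (2 * (v i t \<bullet> vd i)))) (at t)"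
      by (intro DERIV_sum DERIV_cmult norm2_deriv vdd) auto
    moreover have "(\<Sum>i<N. w i * (2 * (v i t \<bullet> vd i))) = 0"
    proof -
      have e: "v i t \<bullet> vd i = - (\<Sum>j<N. w j * (v i t \<bullet> aop \<gamma> (v i t - v j t) (G i - G j)))" for i
        by (simp add: vd_aop inner_sum_right)
      have "(\<Sum>i<N. w i * (2 * (v i t \<bullet> vd i)))
          = - 2 * (\<Sum>i<N. \<Sum>j<N. w i * w j * (v i t \<bullet> aop \<gamma> (v i t - v j t) (G i - G j)))"
        by (simp add: e sum_distrib_left sum_negf mult_ac)
      also have "\<dots> = 0" using energy_zero[where N=N and w=w and \<gamma>=\<gamma> and x="\<lambda>i. v i t" and G=G] by simp
      finally show ?thesis .
    qed
    ultimately show ?thesis by simp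
  qed
  show "dissipN \<gamma> \<epsilon> N w v t \<ge> 0"
    unfolding diss_eq using wpos
    by (intro mult_nonneg_nonneg sum_nonneg) (auto intro!: mult_nonneg_nonneg aop_psd less_imp_le)
  show "((\<lambda>s. entropyN \<epsilon> N w v s) has_real_derivative (- dissipN \<gamma> \<epsilon> N w v t)) (at t)"
  proof (cases "N = 0")
    case True
    have "entropyN \<epsilon> N w v s = 0" for s by (simp add: entropyN_def mollified_def True)
    moreover have "dissipN \<gamma> \<epsilon> N w v t = 0" by (simp add: dissipN_def True)
    ultimately show ?thesis by simp
  next
    case False
    then have Npos: "N > 0" by simp
    have d: "((\<lambda>s. entropyN \<epsilon> N w v s) has_real_derivative
     (\<integral>y. (ln (mm \<epsilon> N w (\<lambda>k. v k t) y) + 1) * (\<Sum>k<N. w k * (psi \<epsilon> (y - v k t) / \<epsilon> * ((y - v k t) \<bullet> vd k))) \<partial>lborel)) (at t)"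
      by (rule entropy_deriv[OF eps Npos wpos vdd])
    have "(\<integral>y. (ln (mm \<epsilon> N w (\<lambda>k. v k t) y) + 1) * (\<Sum>k<N. w k * (psi \<epsilon> (y - v k t) / \<epsilon> * ((y - v k t) \<bullet> vd k))) \<partial>lborel)
        = (\<Sum>k<N. w k * ((\<integral>y. ln (mm \<epsilon> N w (\<lambda>k. v k t) y) *\<^sub>R ((psi \<epsilon> (y - v k t) / \<epsilon>) *\<^sub>R (y - v k t)) \<partial>lborel) \<bullet> vd k))"
      by (rule intD[OF eps Npos wpos])
    also have "\<dots> = (\<Sum>k<N. w k * (G k \<bullet> vd k))"
      by (simp add: G_def gradE_eq[OF eps Npos wpos])
    also have "\<dots> = - (\<Sum>i<N. \<Sum>j<N. w i * w j * (G i \<bullet> aop \<gamma> (v i t - v j t) (G i - G j)))"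
      by (simp add: vd_aop inner_sum_right sum_distrib_left sum_negf mult_ac)
    also have "\<dots> = - dissipN \<gamma> \<epsilon> N w v t"
      unfolding diss_eq entropy_sum[where N=N and w=w and \<gamma>=\<gamma> and x="\<lambda>i. v i t" and G=G] by (rule refl)
    finally show ?thesis using d by simp
  qed
qed


end
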